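(* Let $k\ge 2$ be an integer, let $k_0=\lfloor (k-1)/2\rfloor$ (the largest integer with $2k_0\le k-1$) and $k_1=\lfloor (k-2)/2\rfloor$ (the largest integer with $2k_1+2\le k$). Then there exist functions $f_k(\theta,\lambda)$ and $w_k^{2j+1}(s,\lambda)$ ($j=0,\dots,k_1$), each polynomial in $\lambda$, such that for all $\theta$ $$v_k(\theta)=f_k(\theta,\lambda)+\sum_{j=0}^{k_1}\lambda_{2j+1}\,w_k^{2j+1}(\sin\theta,\lambda),$$ where for every $\theta$ the polynomial $f_k(\theta,\cdot)$ belongs to the ideal $(\lambda_2,\lambda_4,\dots,\lambda_{2k_0})\subset\mathbb{R}[\lambda_1,\dots,\lambda_d]$ (the zero ideal if $k_0=0$), and $w_k^{2j+1}(0,\lambda)=0$ for all $\lambda$ and all $j$.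
   Context: Let $d\ge1$, let $\lambda=(\lambda_1,\dots,\lambda_d)$ be real parameters, and $p(x)=\sum_{i=1}^d\lambda_i x^i$. Consider the planar Liénard system $\dot x=y$, $\dot y=-x+p(x)y$. In polar coordinates $x=r\cos\theta$, $y=r\sin\theta$ its orbits satisfy $$\frac{dr}{d\theta}=\frac{r\,p(r\cos\theta)\sin^2\theta}{-1+\sin\theta\cos\theta\,p(r\cos\theta)}.$$ For small $r_0$ let $r(\theta;r_0)$ be the solution of this equation with $r(0;r_0)=r_0$. For each $\theta$, the map $r_0\mapsto r(\theta;r_0)$ is analytic near $0$ and tangent to the identity, and its inverse has the expansion $r_0=r+\sum_{k\ge2}v_k(\theta)r^k$ where $r=r(\theta;r_0)$; set $v_1(\theta)=1$. Each $v_k(\theta)$ is a polynomial in $\lambda$ with real coefficients depending on $\theta$. Convention: $\lambda_i=0$ for $i>d$. *)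

theory Defs
  imports "HOL-Analysis.Analysis"
begin

text \<open>Parameters lambda = (lambda_1,...,lambda_d) are encoded as functions nat => real
  that vanish at index 0 and at all indices > d (this realises the convention
  lambda_i = 0 for i > d).\<close>
definition params :: "nat \<Rightarrow> (nat \<Rightarrow> real) set" where
  "params d = {lam. \<forall>i. (i = 0 \<or> d < i) \<longrightarrow> lam i = 0}"

definition pL :: "nat \<Rightarrow> (nat \<Rightarrow> real) \<Rightarrow> real \<Rightarrow> real" where
  "pL d lam x = (\<Sum>i=1..d. lam i * x ^ i)"

definition polar_den :: "nat \<Rightarrow> (nat \<Rightarrow> real) \<Rightarrow> real \<Rightarrow> real \<Rightarrow> real" where
  "polar_den d lam \<theta> r = -1 + sin \<theta> * cos \<theta> * pL d lam (r * cos \<theta>)"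

definition polar_rhs :: "nat \<Rightarrow> (nat \<Rightarrow> real) \<Rightarrow> real \<Rightarrow> real \<Rightarrow> real" where
  "polar_rhs d lam \<theta> r =
     r * pL d lam (r * cos \<theta>) * (sin \<theta>)\<^sup>2 / polar_den d lam \<theta> r"

definition is_polar_sol ::
  "nat \<Rightarrow> (nat \<Rightarrow> real) \<Rightarrow> real \<Rightarrow> (real \<Rightarrow> real) \<Rightarrow> real set \<Rightarrow> bool" where
  "is_polar_sol d lam r0 \<phi> I \<longleftrightarrow>
     is_interval I \<and> 0 \<in> I \<and> \<phi> 0 = r0 \<and>
     (\<forall>t\<in>I. polar_den d lam t (\<phi> t) \<noteq> 0 \<and>
        (\<phi> has_real_derivative polar_rhs d lam t (\<phi> t)) (at t within I))"

definition inv_expansion :: "nat \<Rightarrow> (nat \<Rightarrow> real) \<Rightarrow> real \<Rightarrow> (nat \<Rightarrow> real) \<Rightarrow> bool" where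
  "inv_expansion d lam \<theta> v \<longleftrightarrow>
     (\<exists>\<epsilon>>0. \<forall>r0. \<bar>r0\<bar> < \<epsilon> \<longrightarrow>
        (\<exists>\<phi> I. is_polar_sol d lam r0 \<phi> I \<and> \<theta> \<in> I \<and>
                 (\<lambda>k. v k * (\<phi> \<theta>) ^ k) sums r0))"

definition v_coeff :: "nat \<Rightarrow> (nat \<Rightarrow> real) \<Rightarrow> real \<Rightarrow> nat \<Rightarrow> real" where
  "v_coeff d lam \<theta> k = (THE v. inv_expansion d lam \<theta> v) k"

definition poly_in :: "nat \<Rightarrow> ((nat \<Rightarrow> real) \<Rightarrow> real) \<Rightarrow> bool" where
  "poly_in d P \<longleftrightarrow> (\<exists>M c. finite M \<and>
     (\<forall>lam. P lam = (\<Sum>m\<in>M. c m * (\<Prod>i\<in>{1..d}. lam i ^ m i))))"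

end

theory Submission
  imports Defs "HOL-Real_Asymp.Real_Asymp"
begin

definition mon :: "nat \<Rightarrow> (nat \<Rightarrow> real) \<Rightarrow> (nat \<Rightarrow> nat) \<Rightarrow> real" where
  "mon d lam m = (\<Prod>i\<in>{1..d}. lam i ^ m i)"

definition PP :: "nat \<Rightarrow> (real \<Rightarrow> (nat \<Rightarrow> real) \<Rightarrow> real) \<Rightarrow> bool" where
  "PP d Q \<longleftrightarrow> (\<exists>M c. finite M \<and> (\<forall>m\<in>M. continuous_on UNIV (c m)) \<and>
      (\<forall>t lam. Q t lam = (\<Sum>m\<in>M. c m t * mon d lam m)))"

lemma PP_gen:
  fixes S :: "'a set"
  assumes "finite S" "\<And>x. x \<in> S \<Longrightarrow> continuous_on UNIV (a x)"
  shows "PP d (\<lambda>t lam. \<Sum>x\<in>S. a x t * mon d lam (e x))"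
proof -
  define c where "c m t = (\<Sum>x\<in>{x\<in>S. e x = m}. a x t)" for m t
  have "\<forall>t lam. (\<Sum>x\<in>S. a x t * mon d lam (e x)) = (\<Sum>m\<in>e ` S. c m t * mon d lam m)"
  proof (intro allI)
    fix t lam
    have "(\<Sum>x\<in>S. a x t * mon d lam (e x)) = (\<Sum>m\<in>e ` S. \<Sum>x\<in>{x\<in>S. e x = m}. a x t * mon d lam (e x))"
      by (rule sum.image_gen[OF assms(1)])
    also have "\<dots> = (\<Sum>m\<in>e ` S. c m t * mon d lam m)"
      unfolding c_def sum_distrib_right by (intro sum.cong refl) auto
    finally show "(\<Sum>x\<in>S. a x t * mon d lam (e x)) = (\<Sum>m\<in>e ` S. c m t * mon d lam m)" .
  qed
  moreover have "\<forall>m\<in>e ` S. continuous_on UNIV (c m)"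
    unfolding c_def using assms by (auto intro!: continuous_on_sum)
  ultimately show ?thesis unfolding PP_def using assms(1) by blast
qed

lemma PP_D:
  assumes "PP d Q"
  obtains M c where "finite M" "\<And>m. m\<in>M \<Longrightarrow> continuous_on UNIV (c m)"
     "\<And>t lam. Q t lam = (\<Sum>m\<in>M. c m t * mon d lam m)"
  using assms unfolding PP_def by blast

lemma PP_cong: "PP d Q \<Longrightarrow> (\<And>t lam. Q t lam = Q' t lam) \<Longrightarrow> PP d Q'"
proof -
  assume "PP d Q" "\<And>t lam. Q t lam = Q' t lam"
  then have "Q = Q'" by (intro ext) auto
  with \<open>PP d Q\<close> show ?thesis by simp
qed

lemma PP_const: "continuous_on UNIV g \<Longrightarrow> PP d (\<lambda>t lam. g t)"
  using PP_gen[of "{()}" "\<lambda>_. g" d "\<lambda>_. (\<lambda>_. 0)"] by (simp add: mon_def)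

lemma PP_var: assumes "i \<in> {1..d}" shows "PP d (\<lambda>t lam. lam i)"
proof -
  have "mon d lam (\<lambda>j. if j = i then 1 else 0) = lam i" for lam
  proof -
    have "mon d lam (\<lambda>j. if j = i then 1 else 0) = (\<Prod>j\<in>{1..d}. if j = i then lam i else 1)"
      unfolding mon_def by (intro prod.cong) auto
    also have "\<dots> = lam i" using assms by (subst prod.delta) auto
    finally show ?thesis .
  qed
  then show ?thesis
    using PP_gen[of "{()}" "\<lambda>_ _. 1" d "\<lambda>_. (\<lambda>j. if j = i then 1 else 0)"] by simp
qed

lemma PP_add:
  assumes "PP d P" "PP d Q" shows "PP d (\<lambda>t lam. P t lam + Q t lam)"
proof -
  obtain M c where M: "finite M" "\<And>m. m\<in>M \<Longrightarrow> continuous_on UNIV (c m)"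
     "\<And>t lam. P t lam = (\<Sum>m\<in>M. c m t * mon d lam m)" using PP_D[OF assms(1)] by blast
  obtain N e where N: "finite N" "\<And>m. m\<in>N \<Longrightarrow> continuous_on UNIV (e m)"
     "\<And>t lam. Q t lam = (\<Sum>m\<in>N. e m t * mon d lam m)" using PP_D[OF assms(2)] by blast
  let ?S = "Inl ` M \<union> Inr ` N"
  let ?a = "\<lambda>x. case x of Inl m \<Rightarrow> c m | Inr m \<Rightarrow> e m"
  let ?e = "\<lambda>x. case x of Inl m \<Rightarrow> m | Inr m \<Rightarrow> m"
  have "PP d (\<lambda>t lam. \<Sum>x\<in>?S. ?a x t * mon d lam (?e x))"
    by (rule PP_gen) (use M N in auto)
  moreover have "(\<Sum>x\<in>?S. ?a x t * mon d lam (?e x)) = P t lam + Q t lam" for t lam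
    using M N by (subst sum.union_disjoint) (auto simp: sum.reindex)
  ultimately show ?thesis by (rule PP_cong)
qed

lemma mon_add: "mon d lam (\<lambda>i. a i + b i) = mon d lam a * mon d lam b"
  unfolding mon_def by (simp add: power_add prod.distrib)

lemma PP_mult:
  assumes "PP d P" "PP d Q" shows "PP d (\<lambda>t lam. P t lam * Q t lam)"
proof -
  obtain M c where M: "finite M" "\<And>m. m\<in>M \<Longrightarrow> continuous_on UNIV (c m)"
     "\<And>t lam. P t lam = (\<Sum>m\<in>M. c m t * mon d lam m)" using PP_D[OF assms(1)] by blast
  obtain N e where N: "finite N" "\<And>m. m\<in>N \<Longrightarrow> continuous_on UNIV (e m)"
     "\<And>t lam. Q t lam = (\<Sum>m\<in>N. e m t * mon d lam m)" using PP_D[OF assms(2)] by blast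
  have "PP d (\<lambda>t lam. \<Sum>x\<in>M \<times> N. (c (fst x) t * e (snd x) t) * mon d lam (\<lambda>i. fst x i + snd x i))"
    by (rule PP_gen) (use M N in \<open>auto intro!: continuous_on_mult\<close>)
  moreover have "(\<Sum>x\<in>M \<times> N. (c (fst x) t * e (snd x) t) * mon d lam (\<lambda>i. fst x i + snd x i))
      = P t lam * Q t lam" for t lam
    unfolding M(3) N(3) sum_product sum.cartesian_product mon_add
    by (intro sum.cong refl) (auto simp: algebra_simps)
  ultimately show ?thesis by (rule PP_cong)
qed

lemma PP_sum:
  assumes "finite S" "\<And>x. x \<in> S \<Longrightarrow> PP d (Q x)"
  shows "PP d (\<lambda>t lam. \<Sum>x\<in>S. Q x t lam)"
  using assms
proof (induction S rule: finite_induct)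
  case empty
  then show ?case using PP_const[of "\<lambda>_. 0" d] by simp
next
  case (insert x F)
  then show ?case using PP_add[of d "Q x" "\<lambda>t lam. \<Sum>x\<in>F. Q x t lam"] by simp
qed

lemma PP_cmult: "continuous_on UNIV g \<Longrightarrow> PP d Q \<Longrightarrow> PP d (\<lambda>t lam. g t * Q t lam)"
  using PP_mult[OF PP_const] by blast

lemma PP_minus: "PP d Q \<Longrightarrow> PP d (\<lambda>t lam. - Q t lam)"
  using PP_cmult[of "\<lambda>_. -1" d Q] by simp

lemma PP_continuous: assumes "PP d Q" shows "continuous_on UNIV (\<lambda>t. Q t lam)"
proof -
  obtain M c where M: "finite M" "\<And>m. m\<in>M \<Longrightarrow> continuous_on UNIV (c m)"
     "\<And>t lam. Q t lam = (\<Sum>m\<in>M. c m t * mon d lam m)" using PP_D[OF assms] by blast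
  show ?thesis unfolding M(3) using M by (auto intro!: continuous_intros)
qed

lemma PP_poly_in: assumes "PP d Q" shows "poly_in d (Q t)"
proof -
  obtain M c where M: "finite M" "\<And>m. m\<in>M \<Longrightarrow> continuous_on UNIV (c m)"
     "\<And>t lam. Q t lam = (\<Sum>m\<in>M. c m t * mon d lam m)" using PP_D[OF assms] by blast
  show ?thesis unfolding poly_in_def
    by (rule exI[of _ M], rule exI[of _ "\<lambda>m. c m t"]) (use M in \<open>auto simp: mon_def\<close>)
qed

definition antider :: "(real \<Rightarrow> real) \<Rightarrow> real \<Rightarrow> real" where
  "antider g x = integral {0..x} g - integral {x..0} g"

lemma antider_0[simp]: "antider g 0 = 0"
  by (simp add: antider_def)

lemma antider_eq:
  assumes g: "continuous_on UNIV g" and a: "a \<le> 0" "a \<le> y"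
  shows "antider g y = integral {a..y} g - integral {a..0} g"
proof -
  have int: "g integrable_on {u..v}" for u v
    by (rule integrable_continuous_interval) (rule continuous_on_subset[OF g], auto)
  show ?thesis
  proof (cases "0 \<le> y")
    case True
    have "integral {y..0} g = 0"
      using True by (cases "y = 0") auto
    moreover have "integral {a..0} g + integral {0..y} g = integral {a..y} g"
      by (rule Henstock_Kurzweil_Integration.integral_combine) (use True a int in auto)
    ultimately show ?thesis unfolding antider_def by linarith
  next
    case False
    have "integral {0..y} g = 0"
      using False by auto
    moreover have "integral {a..y} g + integral {y..0} g = integral {a..0} g"
      by (rule Henstock_Kurzweil_Integration.integral_combine) (use False a int in auto)
    ultimately show ?thesis unfolding antider_def by linarith
  qed
qed

lemma antider_deriv:
  assumes g: "continuous_on UNIV g"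
  shows "(antider g has_real_derivative g x) (at x)"
proof -
  define a where "a = min x 0 - 1"
  have c: "continuous_on {a..x+1} g" using continuous_on_subset[OF g] by blast
  have xin: "x \<in> {a..x+1}" by (simp add: a_def)
  have d1: "((\<lambda>y. integral {a..y} g) has_real_derivative g x) (at x within {a..x+1})"
    by (rule integral_has_real_derivative[OF c xin])
  have "at x within {a..x+1} = at x" by (rule at_within_interior) (simp add: a_def)
  with d1 have d2: "((\<lambda>y. integral {a..y} g) has_real_derivative g x) (at x)" by simp
  have d3: "((\<lambda>y. integral {a..y} g - integral {a..0} g) has_real_derivative g x - 0) (at x)"
    by (rule DERIV_diff[OF d2 DERIV_const])
  show ?thesis
  proof (rule has_field_derivative_transform_within_open[of _ _ _ "{a<..}"])
    show "((\<lambda>y. integral {a..y} g - integral {a..0} g) has_real_derivative g x) (at x)"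
      using d3 by simp
    show "x \<in> {a<..}" by (simp add: a_def)
    show "open {a<..}" by simp
    fix y assume "y \<in> {a<..}"
    then show "integral {a..y} g - integral {a..0} g = antider g y"
      using antider_eq[OF g, of a y] by (simp add: a_def)
  qed
qed

lemma antider_cont: "continuous_on UNIV g \<Longrightarrow> continuous_on UNIV (antider g)"
  by (meson DERIV_isCont antider_deriv continuous_at_imp_continuous_on)

lemma antider_sum:
  assumes "finite M" "\<And>m. m \<in> M \<Longrightarrow> continuous_on UNIV (c m)"
  shows "antider (\<lambda>u. \<Sum>m\<in>M. c m u * k m) t = (\<Sum>m\<in>M. antider (c m) t * k m)"
proof -
  have int: "c m integrable_on {u..v}" if "m \<in> M" for u v m
    by (rule integrable_continuous_interval) (rule continuous_on_subset[OF assms(2)[OF that]], auto)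
  have I: "integral {u..v} (\<lambda>u. \<Sum>m\<in>M. c m u * k m) = (\<Sum>m\<in>M. integral {u..v} (c m) * k m)" for u v
    using assms(1) int by (subst integral_sum) (auto intro: integrable_on_mult_left)
  show ?thesis unfolding antider_def I by (simp add: sum_subtractf left_diff_distrib)
qed

lemma PP_antider:
  assumes "PP d Q" shows "PP d (\<lambda>t lam. antider (\<lambda>u. Q u lam) t)"
proof -
  obtain M c where M: "finite M" "\<And>m. m\<in>M \<Longrightarrow> continuous_on UNIV (c m)"
     "\<And>t lam. Q t lam = (\<Sum>m\<in>M. c m t * mon d lam m)" using PP_D[OF assms] by blast
  have "PP d (\<lambda>t lam. \<Sum>m\<in>M. antider (c m) t * mon d lam m)"
    using PP_gen[of M "\<lambda>m. antider (c m)" d "\<lambda>m. m"] M by (auto intro: antider_cont)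
  then show ?thesis
    by (rule PP_cong) (simp add: M(3) antider_sum[OF M(1,2)])
qed

definition zero :: "nat set \<Rightarrow> (nat \<Rightarrow> real) \<Rightarrow> nat \<Rightarrow> real" where
  "zero Z lam = (\<lambda>j. if j \<in> Z then 0 else lam j)"

lemma poly_in_gen:
  fixes S :: "'a set"
  assumes "finite S"
  shows "poly_in d (\<lambda>lam. \<Sum>x\<in>S. a x * mon d lam (e x))"
proof -
  have "PP d (\<lambda>t lam. \<Sum>x\<in>S. a x * mon d lam (e x))"
    using PP_gen[of S "\<lambda>x _. a x" d e] assms by auto
  then show ?thesis using PP_poly_in by blast
qed

lemma poly_in_D:
  assumes "poly_in d P"
  obtains M c where "finite M" "\<And>lam. P lam = (\<Sum>m\<in>M. c m * mon d lam m)"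
  using assms unfolding poly_in_def mon_def by blast

lemma poly_in_zero: assumes "poly_in d P" shows "poly_in d (\<lambda>lam. P (zero Z lam))"
proof -
  obtain M c where M: "finite M" "\<And>lam. P lam = (\<Sum>m\<in>M. c m * mon d lam m)"
    using poly_in_D[OF assms] by blast
  define ind where "ind m = (if (\<exists>i\<in>Z\<inter>{1..d}. m i \<noteq> 0) then 0 else (1::real))" for m :: "nat \<Rightarrow> nat"
  have key: "mon d (zero Z lam) m = ind m * mon d lam m" for lam m
  proof (cases "\<exists>i\<in>Z\<inter>{1..d}. m i \<noteq> 0")
    case True
    then obtain i where i: "i \<in> Z" "i \<in> {1..d}" "m i \<noteq> 0" by blast
    have z: "zero Z lam i ^ m i = 0" using i by (simp add: zero_def)
    have "mon d (zero Z lam) m = 0" unfolding mon_def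
      by (rule prod_zero) (use i z in blast)+
    then show ?thesis using True by (simp add: ind_def)
  next
    case False
    have "mon d (zero Z lam) m = mon d lam m" unfolding mon_def
    proof (rule prod.cong[OF refl])
      fix j assume "j \<in> {1..d}"
      then show "zero Z lam j ^ m j = lam j ^ m j"
        using False by (cases "j \<in> Z") (auto simp: zero_def)
    qed
    then show ?thesis using False by (simp add: ind_def)
  qed
  have "P (zero Z lam) = (\<Sum>m\<in>M. (c m * ind m) * mon d lam m)" for lam
    unfolding M(2) key by (simp add: mult.assoc)
  then have "(\<lambda>lam. P (zero Z lam)) = (\<lambda>lam. \<Sum>m\<in>M. (c m * ind m) * mon d lam m)"
    by (rule ext)
  then show ?thesis using poly_in_gen[OF M(1), of d "\<lambda>m. c m * ind m" "\<lambda>m. m"] by simp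
qed

lemma poly_in_const0: "poly_in d (\<lambda>_. 0)"
  using poly_in_gen[of "{}" d] by simp

lemma poly_in_div:
  assumes "poly_in d P"
  shows "\<exists>g. poly_in d g \<and> (\<forall>lam. P lam - P (lam(i := 0)) = lam i * g lam)"
proof (cases "i \<in> {1..d}")
  case False
  have mm: "mon d (lam(i := 0)) m = mon d lam m" for lam m
    unfolding mon_def using False by (intro prod.cong refl) auto
  obtain M c where M: "finite M" "\<And>lam. P lam = (\<Sum>m\<in>M. c m * mon d lam m)"
    using poly_in_D[OF assms] by blast
  have "P lam - P (lam(i := 0)) = lam i * 0" for lam unfolding M(2) mm by simp
  then show ?thesis using poly_in_const0 by blast
next
  case True
  obtain M c where M: "finite M" "\<And>lam. P lam = (\<Sum>m\<in>M. c m * mon d lam m)"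
    using poly_in_D[OF assms] by blast
  define M1 where "M1 = {m\<in>M. m i \<noteq> 0}"
  have fin1: "finite M1" using M(1) by (simp add: M1_def)
  have rem: "mon d lam m = lam i ^ m i * (\<Prod>j\<in>{1..d}-{i}. lam j ^ m j)" for lam m
    unfolding mon_def using True by (subst prod.remove[of _ i]) auto
  have sh: "mon d lam m = lam i * mon d lam (m(i := m i - 1))" if "m i \<noteq> 0" for lam m
  proof -
    have p: "(\<Prod>j\<in>{1..d}-{i}. lam j ^ (m(i := m i - 1)) j) = (\<Prod>j\<in>{1..d}-{i}. lam j ^ m j)"
      by (intro prod.cong refl) auto
    have "lam i ^ m i = lam i * lam i ^ (m i - 1)"
      using that by (cases "m i") auto
    then show ?thesis unfolding rem[of lam m] rem[of lam "m(i := m i - 1)"] p by simp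
  qed
  have z: "mon d (lam(i := 0)) m = (if m i = 0 then mon d lam m else 0)" for lam m
  proof (cases "m i = 0")
    case True
    have "mon d (lam(i := 0)) m = mon d lam m" unfolding mon_def
      by (intro prod.cong refl) (use True in auto)
    then show ?thesis using True by simp
  next
    case False
    have "mon d (lam(i := 0)) m = (lam(i:=0)) i ^ m i * (\<Prod>j\<in>{1..d}-{i}. (lam(i:=0)) j ^ m j)"
      by (rule rem)
    then show ?thesis using False by simp
  qed
  have eq: "P lam - P (lam(i := 0)) = lam i * (\<Sum>m\<in>M1. c m * mon d lam (m(i := m i - 1)))" for lam
  proof -
    have "P lam - P (lam(i := 0)) = (\<Sum>m\<in>M. c m * mon d lam m - c m * mon d (lam(i := 0)) m)"
      unfolding M(2) by (simp add: sum_subtractf)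
    also have "\<dots> = (\<Sum>m\<in>M. if m i \<noteq> 0 then c m * mon d lam m else 0)"
      by (intro sum.cong refl) (simp add: z)
    also have "\<dots> = (\<Sum>m\<in>M1. c m * mon d lam m)"
      unfolding M1_def using M(1) by (simp add: sum.inter_filter)
    also have "\<dots> = (\<Sum>m\<in>M1. lam i * (c m * mon d lam (m(i := m i - 1))))"
      by (intro sum.cong refl) (simp add: M1_def sh[of _ lam])
    finally show ?thesis by (simp add: sum_distrib_left)
  qed
  show ?thesis
    using poly_in_gen[OF fin1, of d c "\<lambda>m. m(i := m i - 1)"] eq by blast
qed

lemma zero_insert: "zero (insert x Z) lam = (zero Z lam)(x := 0)"
  by (auto simp: zero_def)

lemma zero_upd: "zero Z (lam(x:=0)) = (zero Z lam)(x:=0)"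
  by (auto simp: zero_def fun_eq_iff)

lemma poly_in_tele:
  fixes n :: nat and a :: "nat \<Rightarrow> nat"
  assumes "poly_in d P"
  shows "\<exists>g. (\<forall>i<n. poly_in d (g i)) \<and>
     (\<forall>lam. P lam - P (zero (a ` {..<n}) lam) = (\<Sum>i<n. lam (a i) * g i lam))"
proof (induction n)
  case 0
  have "zero (a ` {..<0}) lam = lam" for lam by (simp add: zero_def)
  then show ?case by simp
next
  case (Suc n)
  then obtain g where g: "\<forall>i<n. poly_in d (g i)"
     "\<forall>lam. P lam - P (zero (a ` {..<n}) lam) = (\<Sum>i<n. lam (a i) * g i lam)" by blast
  define Z where "Z = a ` {..<n}"
  obtain h where h: "poly_in d h" "\<forall>lam. P (zero Z lam) - P ((zero Z lam)(a n := 0))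
       = lam (a n) * h lam"
    using poly_in_div[OF poly_in_zero[OF assms, of Z], of "a n"]
    by (metis zero_upd)
  define h' where "h' lam = (if a n \<in> Z then 0 else h lam)" for lam
  have ph': "poly_in d h'"
  proof (cases "a n \<in> Z")
    case True
    then have "h' = (\<lambda>_. 0)" by (simp add: h'_def fun_eq_iff)
    then show ?thesis using poly_in_const0 by simp
  next
    case False
    then have "h' = h" by (simp add: h'_def fun_eq_iff)
    then show ?thesis using h(1) by simp
  qed
  have e: "a ` {..<Suc n} = insert (a n) Z" by (auto simp: lessThan_Suc Z_def)
  show ?case
  proof (rule exI[of _ "g(n := h')"], rule conjI)
    show "\<forall>i<Suc n. poly_in d ((g(n := h')) i)"
      using g(1) ph' by (auto simp: less_Suc_eq)
    show "\<forall>lam. P lam - P (zero (a ` {..<Suc n}) lam) = (\<Sum>i<Suc n. lam (a i) * (g(n := h')) i lam)"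
    proof
    fix lam
    have s: "(\<Sum>i<Suc n. lam (a i) * (g(n := h')) i lam) = (\<Sum>i<n. lam (a i) * g i lam) + lam (a n) * h' lam"
      by simp
    show "P lam - P (zero (a ` {..<Suc n}) lam) = (\<Sum>i<Suc n. lam (a i) * (g(n := h')) i lam)"
    proof (cases "a n \<in> Z")
      case True
      then have "zero (insert (a n) Z) lam = zero Z lam" by (auto simp: zero_def)
      then show ?thesis unfolding s e using g(2) True by (simp add: h'_def Z_def)
    next
      case False
      have "P lam - P (zero (insert (a n) Z) lam) = (P lam - P (zero Z lam)) + (P (zero Z lam) - P ((zero Z lam)(a n := 0)))"
        by (simp add: zero_insert)
      then show ?thesis unfolding s e using g(2) h(2) False by (simp add: h'_def Z_def)
    qed
    qed
  qed
qed

lemma poly_in_PP: assumes "poly_in d P" shows "PP d (\<lambda>t lam. P lam)"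
proof -
  obtain M c where M: "finite M" "\<And>lam. P lam = (\<Sum>m\<in>M. c m * mon d lam m)"
    using poly_in_D[OF assms] by blast
  show ?thesis using PP_gen[of M "\<lambda>m _. c m" d "\<lambda>m. m"] M by simp
qed

lemma poly_in_diff: "poly_in d P \<Longrightarrow> poly_in d Q \<Longrightarrow> poly_in d (\<lambda>lam. P lam - Q lam)"
  using PP_poly_in[OF PP_add[OF poly_in_PP PP_minus[OF poly_in_PP]]] by simp

definition lt :: "nat \<Rightarrow> (nat \<Rightarrow> real) \<Rightarrow> nat \<Rightarrow> real" where
  "lt d lam i = (if 1 \<le> i \<and> i \<le> d then lam i else 0)"

definition oddpart :: "(nat \<Rightarrow> real) \<Rightarrow> nat \<Rightarrow> real" where
  "oddpart lam = (\<lambda>i. if odd i then lam i else 0)"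

fun EE :: "nat \<Rightarrow> nat \<Rightarrow> real \<Rightarrow> (nat \<Rightarrow> real) \<Rightarrow> real" where
  "EE d 0 t lam = 1"
| "EE d (Suc n) t lam = sin t * (\<Sum>i\<in>{1..Suc n}. lt d lam i * cos t ^ (i+1) * EE d (Suc n - i) t lam)"

definition FF :: "nat \<Rightarrow> nat \<Rightarrow> real \<Rightarrow> (nat \<Rightarrow> real) \<Rightarrow> real" where
  "FF d m t lam = - (sin t ^ 2) * (\<Sum>i\<in>{1..m-1}. lt d lam i * cos t ^ i * EE d (m-1-i) t lam)"

function VV :: "nat \<Rightarrow> nat \<Rightarrow> real \<Rightarrow> (nat \<Rightarrow> real) \<Rightarrow> real" where
  "VV d k t lam = (if k = 0 then 0 else if k = 1 then 1 else
      antider (\<lambda>u. - (\<Sum>j\<in>{1..<k}. real j * VV d j u lam * FF d (k - j + 1) u lam)) t)"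
  by pat_completeness auto
termination by (relation "Wellfounded.measure (\<lambda>(d,k,t,lam). k)") auto

declare VV.simps[simp del]

definition RR :: "nat \<Rightarrow> nat \<Rightarrow> real \<Rightarrow> (nat \<Rightarrow> real) \<Rightarrow> real" where
  "RR d k t lam = - (\<Sum>j\<in>{1..<k}. real j * VV d j t lam * FF d (k - j + 1) t lam)"

fun EO :: "nat \<Rightarrow> nat \<Rightarrow> real \<Rightarrow> (nat \<Rightarrow> real) \<Rightarrow> real" where
  "EO d 0 s lam = 1"
| "EO d (Suc n) s lam = s * (\<Sum>i\<in>{1..Suc n}. lt d (oddpart lam) i * (1 - s^2) ^ ((i+1) div 2) * EO d (Suc n - i) s lam)"

definition QQ :: "nat \<Rightarrow> nat \<Rightarrow> real \<Rightarrow> (nat \<Rightarrow> real) \<Rightarrow> real" where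
  "QQ d m s lam = - (s ^ 2) * (\<Sum>i\<in>{1..m-1}. lt d (oddpart lam) i * (1 - s^2) ^ ((i - 1) div 2) * EO d (m-1-i) s lam)"

function WW :: "nat \<Rightarrow> nat \<Rightarrow> real \<Rightarrow> (nat \<Rightarrow> real) \<Rightarrow> real" where
  "WW d k s lam = (if k = 0 then 0 else if k = 1 then 1 else
      antider (\<lambda>u. - (\<Sum>j\<in>{1..<k}. real j * WW d j u lam * QQ d (k - j + 1) u lam)) s)"
  by pat_completeness auto
termination by (relation "Wellfounded.measure (\<lambda>(d,k,t,lam). k)") auto

declare WW.simps[simp del]


definition RW :: "nat \<Rightarrow> nat \<Rightarrow> real \<Rightarrow> (nat \<Rightarrow> real) \<Rightarrow> real" where
  "RW d k s lam = - (\<Sum>j\<in>{1..<k}. real j * WW d j s lam * QQ d (k - j + 1) s lam)"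

lemma VV_0k[simp]: "VV d 0 t lam = 0" and VV_1k[simp]: "VV d (Suc 0) t lam = 1"
  by (simp_all add: VV.simps)

lemma VV_ge2: "2 \<le> k \<Longrightarrow> VV d k t lam = antider (\<lambda>u. RR d k u lam) t"
  by (subst VV.simps) (simp add: RR_def)

lemma WW_0k[simp]: "WW d 0 t lam = 0" and WW_1k[simp]: "WW d (Suc 0) t lam = 1"
  by (simp_all add: WW.simps)

lemma WW_ge2: "2 \<le> k \<Longrightarrow> WW d k t lam = antider (\<lambda>u. RW d k u lam) t"
  by (subst WW.simps) (simp add: RW_def)

lemma PP_lt: "PP d (\<lambda>t lam. lt d lam i)"
proof (cases "1 \<le> i \<and> i \<le> d")
  case True then show ?thesis using PP_var[of i d] by (simp add: lt_def)
next
  case False show ?thesis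
    by (rule PP_cong[OF PP_const[of "\<lambda>_. 0" d]]) (use False in \<open>auto simp: lt_def\<close>)
qed

lemma PP_lto: "PP d (\<lambda>t lam. lt d (oddpart lam) i)"
proof (cases "1 \<le> i \<and> i \<le> d \<and> odd i")
  case True then show ?thesis using PP_var[of i d] by (simp add: lt_def oddpart_def)
next
  case False show ?thesis
    by (rule PP_cong[OF PP_const[of "\<lambda>_. 0" d]]) (use False in \<open>auto simp: lt_def oddpart_def\<close>)
qed

lemma PP_EE: "PP d (EE d n)"
proof (induction n rule: less_induct)
  case (less n)
  show ?case
  proof (cases n)
    case 0
    then show ?thesis using PP_const[of "\<lambda>_. 1" d] by simp
  next
    case (Suc m)
    have "PP d (\<lambda>t lam. lt d lam i * cos t ^ (i+1) * EE d (Suc m - i) t lam)" if "i \<in> {1..Suc m}" for i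
    proof -
      have a: "PP d (\<lambda>t lam. cos t ^ (i+1) * lt d lam i)"
        by (rule PP_cmult[OF _ PP_lt]) (intro continuous_intros)
      have b: "PP d (EE d (Suc m - i))" using less.IH that Suc by simp
      show ?thesis using PP_mult[OF a b] by (simp add: mult_ac)
    qed
    then have "PP d (\<lambda>t lam. \<Sum>i\<in>{1..Suc m}. lt d lam i * cos t ^ (i+1) * EE d (Suc m - i) t lam)"
      by (intro PP_sum) auto
    then have "PP d (\<lambda>t lam. sin t * (\<Sum>i\<in>{1..Suc m}. lt d lam i * cos t ^ (i+1) * EE d (Suc m - i) t lam))"
      by (rule PP_cmult[rotated]) (intro continuous_intros)
    then show ?thesis using Suc by simp
  qed
qed

lemma PP_FF: "PP d (FF d m)"
proof -
  have "PP d (\<lambda>t lam. lt d lam i * cos t ^ i * EE d (m - 1 - i) t lam)" for i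
  proof -
    have a: "PP d (\<lambda>t lam. cos t ^ i * lt d lam i)"
      by (rule PP_cmult[OF _ PP_lt]) (intro continuous_intros)
    show ?thesis by (rule PP_cong[OF PP_mult[OF a PP_EE[of d "m - 1 - i"]]]) (simp add: mult_ac)
  qed
  then have "PP d (\<lambda>t lam. \<Sum>i\<in>{1..m-1}. lt d lam i * cos t ^ i * EE d (m - 1 - i) t lam)"
    by (intro PP_sum) auto
  then have "PP d (\<lambda>t lam. - (sin t ^ 2) * (\<Sum>i\<in>{1..m-1}. lt d lam i * cos t ^ i * EE d (m - 1 - i) t lam))"
    by (rule PP_cmult[rotated]) (intro continuous_intros)
  then show ?thesis by (simp add: FF_def[abs_def])
qed

lemma PP_VV: "PP d (VV d k)"
proof (induction k rule: less_induct)
  case (less k)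
  have R: "PP d (RR d k)"
  proof -
    have "PP d (\<lambda>t lam. real j * (VV d j t lam * FF d (k - j + 1) t lam))" if "j \<in> {1..<k}" for j
      by (rule PP_cmult) (use that less.IH in \<open>auto intro!: PP_mult PP_FF\<close>)
    then have "PP d (\<lambda>t lam. - (\<Sum>j\<in>{1..<k}. real j * (VV d j t lam * FF d (k - j + 1) t lam)))"
      by (intro PP_minus PP_sum) auto
    then show ?thesis by (simp add: RR_def[abs_def] mult_ac)
  qed
  consider "k = 0" | "k = 1" | "2 \<le> k" by linarith
  then show ?case
  proof cases
    case 1 then show ?thesis using PP_const[of "\<lambda>_. 0" d] by simp
  next
    case 2 then show ?thesis using PP_const[of "\<lambda>_. 1" d] by simp
  next
    case 3
    show ?thesis by (rule PP_cong[OF PP_antider[OF R]]) (use 3 in \<open>simp add: VV_ge2\<close>)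
  qed
qed

lemma PP_RR: "PP d (RR d k)"
proof -
  have "PP d (\<lambda>t lam. real j * (VV d j t lam * FF d (k - j + 1) t lam))" for j
    by (rule PP_cmult) (auto intro!: PP_mult PP_FF PP_VV)
  then have "PP d (\<lambda>t lam. - (\<Sum>j\<in>{1..<k}. real j * (VV d j t lam * FF d (k - j + 1) t lam)))"
    by (intro PP_minus PP_sum) auto
  then show ?thesis by (simp add: RR_def[abs_def] mult_ac)
qed

lemma PP_EO: "PP d (EO d n)"
proof (induction n rule: less_induct)
  case (less n)
  show ?case
  proof (cases n)
    case 0
    then show ?thesis using PP_const[of "\<lambda>_. 1" d] by simp
  next
    case (Suc m)
    have "PP d (\<lambda>t lam. lt d (oddpart lam) i * (1 - t^2) ^ ((i+1) div 2) * EO d (Suc m - i) t lam)" if "i \<in> {1..Suc m}" for i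
    proof -
      have a: "PP d (\<lambda>t lam. (1 - t^2) ^ ((i+1) div 2) * lt d (oddpart lam) i)"
        by (rule PP_cmult[OF _ PP_lto]) (intro continuous_intros)
      have b: "PP d (EO d (Suc m - i))" using less.IH that Suc by simp
      show ?thesis using PP_mult[OF a b] by (simp add: mult_ac)
    qed
    then have "PP d (\<lambda>t lam. \<Sum>i\<in>{1..Suc m}. lt d (oddpart lam) i * (1 - t^2) ^ ((i+1) div 2) * EO d (Suc m - i) t lam)"
      by (intro PP_sum) auto
    then have "PP d (\<lambda>t lam. t * (\<Sum>i\<in>{1..Suc m}. lt d (oddpart lam) i * (1 - t^2) ^ ((i+1) div 2) * EO d (Suc m - i) t lam))"
      by (rule PP_cmult[rotated]) (intro continuous_intros)
    then show ?thesis using Suc by simp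
  qed
qed

lemma PP_QQ: "PP d (QQ d m)"
proof -
  have "PP d (\<lambda>t lam. lt d (oddpart lam) i * (1 - t^2) ^ ((i - 1) div 2) * EO d (m - 1 - i) t lam)" for i
  proof -
    have a: "PP d (\<lambda>t lam. (1 - t^2) ^ ((i - 1) div 2) * lt d (oddpart lam) i)"
      by (rule PP_cmult[OF _ PP_lto]) (intro continuous_intros)
    show ?thesis by (rule PP_cong[OF PP_mult[OF a PP_EO[of d "m - 1 - i"]]]) (simp add: mult_ac)
  qed
  then have "PP d (\<lambda>t lam. \<Sum>i\<in>{1..m-1}. lt d (oddpart lam) i * (1 - t^2) ^ ((i - 1) div 2) * EO d (m - 1 - i) t lam)"
    by (intro PP_sum) auto
  then have "PP d (\<lambda>t lam. - (t ^ 2) * (\<Sum>i\<in>{1..m-1}. lt d (oddpart lam) i * (1 - t^2) ^ ((i - 1) div 2) * EO d (m - 1 - i) t lam))"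
    by (rule PP_cmult[rotated]) (intro continuous_intros)
  then show ?thesis by (simp add: QQ_def[abs_def])
qed

lemma PP_WW: "PP d (WW d k)"
proof (induction k rule: less_induct)
  case (less k)
  have R: "PP d (RW d k)"
  proof -
    have "PP d (\<lambda>t lam. real j * (WW d j t lam * QQ d (k - j + 1) t lam))" if "j \<in> {1..<k}" for j
      by (rule PP_cmult) (use that less.IH in \<open>auto intro!: PP_mult PP_QQ\<close>)
    then have "PP d (\<lambda>t lam. - (\<Sum>j\<in>{1..<k}. real j * (WW d j t lam * QQ d (k - j + 1) t lam)))"
      by (intro PP_minus PP_sum) auto
    then show ?thesis by (simp add: RW_def[abs_def] mult_ac)
  qed
  consider "k = 0" | "k = 1" | "2 \<le> k" by linarith
  then show ?case
  proof cases
    case 1 then show ?thesis using PP_const[of "\<lambda>_. 0" d] by simp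
  next
    case 2 then show ?thesis using PP_const[of "\<lambda>_. 1" d] by simp
  next
    case 3
    show ?thesis by (rule PP_cong[OF PP_antider[OF R]]) (use 3 in \<open>simp add: WW_ge2\<close>)
  qed
qed

lemma PP_RW: "PP d (RW d k)"
proof -
  have "PP d (\<lambda>t lam. real j * (WW d j t lam * QQ d (k - j + 1) t lam))" for j
    by (rule PP_cmult) (auto intro!: PP_mult PP_QQ PP_WW)
  then have "PP d (\<lambda>t lam. - (\<Sum>j\<in>{1..<k}. real j * (WW d j t lam * QQ d (k - j + 1) t lam)))"
    by (intro PP_minus PP_sum) auto
  then show ?thesis by (simp add: RW_def[abs_def] mult_ac)
qed

lemma VV_deriv: "((\<lambda>t. VV d k t lam) has_real_derivative RR d k t lam) (at t)"
proof (cases "2 \<le> k")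
  case True
  have c: "continuous_on UNIV (\<lambda>u. RR d k u lam)" by (rule PP_continuous[OF PP_RR])
  show ?thesis using antider_deriv[OF c] True by (simp add: VV_ge2)
next
  case False
  then have "k = 0 \<or> k = 1" by linarith
  then show ?thesis by (auto simp: RR_def)
qed

lemma WW_deriv: "((\<lambda>t. WW d k t lam) has_real_derivative RW d k t lam) (at t)"
proof (cases "2 \<le> k")
  case True
  have c: "continuous_on UNIV (\<lambda>u. RW d k u lam)" by (rule PP_continuous[OF PP_RW])
  show ?thesis using antider_deriv[OF c] True by (simp add: WW_ge2)
next
  case False
  then have "k = 0 \<or> k = 1" by linarith
  then show ?thesis by (auto simp: RW_def)
qed

lemma VV_at0: "VV d k 0 lam = (if k = 1 then 1 else 0)"
  by (cases "2 \<le> k") (auto simp: VV_ge2 VV.simps)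

lemma WW_at0: "WW d k 0 lam = (if k = 1 then 1 else 0)"
  by (cases "2 \<le> k") (auto simp: WW_ge2 WW.simps)


lemma EE_dep: "(\<And>i. i \<le> n \<Longrightarrow> lt d lam i = lt d lam' i) \<Longrightarrow> EE d n t lam = EE d n t lam'"
proof (induction n rule: less_induct)
  case (less n)
  show ?case
  proof (cases n)
    case (Suc m)
    have tm: "lt d lam i * cos t ^ (i+1) * EE d (Suc m - i) t lam = lt d lam' i * cos t ^ (i+1) * EE d (Suc m - i) t lam'"
      if "i \<in> {1..Suc m}" for i
    proof -
      have "EE d (Suc m - i) t lam = EE d (Suc m - i) t lam'"
        by (rule less.IH) (use that Suc less.prems in auto)
      moreover have "lt d lam i = lt d lam' i" using that Suc less.prems by auto
      ultimately show ?thesis by simp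
    qed
    have "(\<Sum>i\<in>{1..Suc m}. lt d lam i * cos t ^ (i+1) * EE d (Suc m - i) t lam) = (\<Sum>i\<in>{1..Suc m}. lt d lam' i * cos t ^ (i+1) * EE d (Suc m - i) t lam')"
      by (rule sum.cong[OF refl tm])
    then show ?thesis using Suc by (simp only: EE.simps)
  qed simp
qed

lemma FF_dep: "(\<And>i. i < m \<Longrightarrow> lt d lam i = lt d lam' i) \<Longrightarrow> FF d m t lam = FF d m t lam'"
proof -
  assume a: "\<And>i. i < m \<Longrightarrow> lt d lam i = lt d lam' i"
  have tm: "lt d lam i * cos t ^ i * EE d (m-1-i) t lam = lt d lam' i * cos t ^ i * EE d (m-1-i) t lam'"
    if "i \<in> {1..m-1}" for i
  proof -
    have "EE d (m-1-i) t lam = EE d (m-1-i) t lam'" by (rule EE_dep) (use that a in auto)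
    moreover have "lt d lam i = lt d lam' i" using that a by auto
    ultimately show ?thesis by simp
  qed
  show ?thesis unfolding FF_def by (simp only: sum.cong[OF refl tm])
qed

lemma VV_dep: "(\<And>i. i < k \<Longrightarrow> lt d lam i = lt d lam' i) \<Longrightarrow> VV d k t lam = VV d k t lam'"
proof (induction k arbitrary: t rule: less_induct)
  case (less k)
  show ?case
  proof (cases "2 \<le> k")
    case True
    have "RR d k u lam = RR d k u lam'" for u
    proof -
      have tm: "real j * VV d j u lam * FF d (k - j + 1) u lam = real j * VV d j u lam' * FF d (k - j + 1) u lam'"
        if "j \<in> {1..<k}" for j
      proof -
        have "VV d j u lam = VV d j u lam'" by (rule less.IH) (use that less.prems in auto)
        moreover have "FF d (k - j + 1) u lam = FF d (k - j + 1) u lam'" by (rule FF_dep) (use that less.prems in auto)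
        ultimately show ?thesis by simp
      qed
      show ?thesis unfolding RR_def by (simp only: sum.cong[OF refl tm])
    qed
    then show ?thesis using True by (simp add: VV_ge2)
  next
    case False
    then have "k = 0 \<or> k = 1" by linarith
    then show ?thesis by auto
  qed
qed

lemma EO_dep: "(\<And>i. i \<le> n \<Longrightarrow> lt d (oddpart lam) i = lt d (oddpart lam') i) \<Longrightarrow> EO d n t lam = EO d n t lam'"
proof (induction n rule: less_induct)
  case (less n)
  show ?case
  proof (cases n)
    case (Suc m)
    have tm: "lt d (oddpart lam) i * (1 - t^2) ^ ((i+1) div 2) * EO d (Suc m - i) t lam = lt d (oddpart lam') i * (1 - t^2) ^ ((i+1) div 2) * EO d (Suc m - i) t lam'"
      if "i \<in> {1..Suc m}" for i
    proof -
      have "EO d (Suc m - i) t lam = EO d (Suc m - i) t lam'"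
        by (rule less.IH) (use that Suc less.prems in auto)
      moreover have "lt d (oddpart lam) i = lt d (oddpart lam') i" using that Suc less.prems by auto
      ultimately show ?thesis by simp
    qed
    have "(\<Sum>i\<in>{1..Suc m}. lt d (oddpart lam) i * (1 - t^2) ^ ((i+1) div 2) * EO d (Suc m - i) t lam) = (\<Sum>i\<in>{1..Suc m}. lt d (oddpart lam') i * (1 - t^2) ^ ((i+1) div 2) * EO d (Suc m - i) t lam')"
      by (rule sum.cong[OF refl tm])
    then show ?thesis using Suc by (simp only: EO.simps)
  qed simp
qed

lemma QQ_dep: "(\<And>i. i < m \<Longrightarrow> lt d (oddpart lam) i = lt d (oddpart lam') i) \<Longrightarrow> QQ d m t lam = QQ d m t lam'"
proof -
  assume a: "\<And>i. i < m \<Longrightarrow> lt d (oddpart lam) i = lt d (oddpart lam') i"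
  have tm: "lt d (oddpart lam) i * (1 - t^2) ^ ((i - 1) div 2) * EO d (m-1-i) t lam = lt d (oddpart lam') i * (1 - t^2) ^ ((i - 1) div 2) * EO d (m-1-i) t lam'"
    if "i \<in> {1..m-1}" for i
  proof -
    have "EO d (m-1-i) t lam = EO d (m-1-i) t lam'" by (rule EO_dep) (use that a in auto)
    moreover have "lt d (oddpart lam) i = lt d (oddpart lam') i" using that a by auto
    ultimately show ?thesis by simp
  qed
  show ?thesis unfolding QQ_def by (simp only: sum.cong[OF refl tm])
qed

lemma WW_dep: "(\<And>i. i < k \<Longrightarrow> lt d (oddpart lam) i = lt d (oddpart lam') i) \<Longrightarrow> WW d k t lam = WW d k t lam'"
proof (induction k arbitrary: t rule: less_induct)
  case (less k)
  show ?case
  proof (cases "2 \<le> k")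
    case True
    have "RW d k u lam = RW d k u lam'" for u
    proof -
      have tm: "real j * WW d j u lam * QQ d (k - j + 1) u lam = real j * WW d j u lam' * QQ d (k - j + 1) u lam'"
        if "j \<in> {1..<k}" for j
      proof -
        have "WW d j u lam = WW d j u lam'" by (rule less.IH) (use that less.prems in auto)
        moreover have "QQ d (k - j + 1) u lam = QQ d (k - j + 1) u lam'" by (rule QQ_dep) (use that less.prems in auto)
        ultimately show ?thesis by simp
      qed
      show ?thesis unfolding RW_def by (simp only: sum.cong[OF refl tm])
    qed
    then show ?thesis using True by (simp add: WW_ge2)
  next
    case False
    then have "k = 0 \<or> k = 1" by linarith
    then show ?thesis by auto
  qed
qed

lemma WW_zero_lam: "2 \<le> k \<Longrightarrow> WW d k t (\<lambda>_. 0) = 0"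
proof -
  assume k: "2 \<le> k"
  have "QQ d m u (\<lambda>_. 0) = 0" for m u by (simp add: QQ_def lt_def oddpart_def)
  then have "RW d k u (\<lambda>_. 0) = 0" for u by (simp add: RW_def)
  then show ?thesis using k by (simp add: WW_ge2 antider_def)
qed

lemma lt_odd_even: "even i \<Longrightarrow> lt d (oddpart lam) i = 0"
  by (simp add: lt_def oddpart_def)

lemma cos_pow_even: "cos (t::real) ^ (2 * j) = (1 - sin t ^ 2) ^ j"
  by (simp only: power_mult cos_squared_eq)

lemma EE_odd: "EE d n t (oddpart lam) = EO d n (sin t) lam"
proof (induction n rule: less_induct)
  case (less n)
  show ?case
  proof (cases n)
    case (Suc m)
    have tm: "lt d (oddpart lam) i * cos t ^ (i+1) * EE d (Suc m - i) t (oddpart lam)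
        = lt d (oddpart lam) i * (1 - sin t ^ 2) ^ ((i+1) div 2) * EO d (Suc m - i) (sin t) lam"
      if "i \<in> {1..Suc m}" for i
    proof (cases "odd i")
      case True
      then have "i + 1 = 2 * ((i+1) div 2)" by presburger
      then have "cos t ^ (i+1) = (1 - sin t ^ 2) ^ ((i+1) div 2)" by (metis cos_pow_even)
      moreover have "EE d (Suc m - i) t (oddpart lam) = EO d (Suc m - i) (sin t) lam"
        by (rule less.IH) (use that Suc in auto)
      ultimately show ?thesis by simp
    qed (simp add: lt_odd_even)
    show ?thesis using Suc by (simp only: EE.simps EO.simps sum.cong[OF refl tm])
  qed simp
qed

lemma FF_odd: "FF d m t (oddpart lam) = cos t * QQ d m (sin t) lam"
proof -
  have tm: "lt d (oddpart lam) i * cos t ^ i * EE d (m-1-i) t (oddpart lam)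
      = cos t * (lt d (oddpart lam) i * (1 - sin t ^ 2) ^ ((i - 1) div 2) * EO d (m-1-i) (sin t) lam)"
    if "i \<in> {1..m-1}" for i
  proof (cases "odd i")
    case True
    then have "i = Suc (2 * ((i - 1) div 2))" by presburger
    then have "cos t ^ i = cos t * (1 - sin t ^ 2) ^ ((i - 1) div 2)" by (metis cos_pow_even power_Suc)
    then show ?thesis by (simp add: EE_odd)
  qed (simp add: lt_odd_even)
  show ?thesis unfolding FF_def QQ_def
    by (simp only: sum.cong[OF refl tm] sum_distrib_left[symmetric]) (simp add: algebra_simps)
qed

lemma VV_odd: "VV d k t (oddpart lam) = WW d k (sin t) lam"
proof (induction k arbitrary: t rule: less_induct)
  case (less k)
  show ?case
  proof (cases "2 \<le> k")
    case True
    have R: "RR d k u (oddpart lam) = RW d k (sin u) lam * cos u" for u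
    proof -
      have tm: "real j * VV d j u (oddpart lam) * FF d (k - j + 1) u (oddpart lam)
          = (real j * WW d j (sin u) lam * QQ d (k - j + 1) (sin u) lam) * cos u"
        if "j \<in> {1..<k}" for j
        using less.IH[of j u] that by (simp add: FF_odd)
      show ?thesis unfolding RR_def RW_def by (simp only: sum.cong[OF refl tm] sum_distrib_right[symmetric])
    qed
    define h where "h u = VV d k u (oddpart lam) - WW d k (sin u) lam" for u
    have "(h has_real_derivative 0) (at u)" for u
    proof -
      have "(h has_real_derivative RR d k u (oddpart lam) - RW d k (sin u) lam * cos u) (at u)"
        unfolding h_def
        by (intro DERIV_diff VV_deriv DERIV_chain2[OF WW_deriv] DERIV_sin)
      then show ?thesis by (simp add: R)
    qed
    then have "h t = h 0" by (intro DERIV_isconst_all) auto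
    then show ?thesis using True by (simp add: h_def VV_at0 WW_at0)
  next
    case False
    then have "k = 0 \<or> k = 1" by linarith
    then show ?thesis by auto
  qed
qed

definition Lsum :: "nat \<Rightarrow> (nat \<Rightarrow> real) \<Rightarrow> real" where
  "Lsum d lam = (\<Sum>i\<in>{1..d}. \<bar>lam i\<bar>)"

definition BB :: "nat \<Rightarrow> (nat \<Rightarrow> real) \<Rightarrow> real" where
  "BB d lam = Lsum d lam + 1"

lemma Lsum_nonneg: "0 \<le> Lsum d lam"
  by (simp add: Lsum_def sum_nonneg)

lemma BB_ge1: "1 \<le> BB d lam"
  using Lsum_nonneg by (simp add: BB_def)

lemma lt_sum_bound:
  assumes "finite A"
  shows "(\<Sum>i\<in>A. \<bar>lt d lam i\<bar>) \<le> Lsum d lam"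
proof -
  have "(\<Sum>i\<in>A. \<bar>lt d lam i\<bar>) = (\<Sum>i\<in>A \<inter> {1..d}. \<bar>lam i\<bar>)"
    using assms by (intro sum.mono_neutral_cong_right) (auto simp: lt_def)
  also have "\<dots> \<le> (\<Sum>i\<in>{1..d}. \<bar>lam i\<bar>)"
    by (intro sum_mono2) auto
  finally show ?thesis by (simp add: Lsum_def)
qed

lemma lt_sum_bound_w:
  assumes "finite A" "\<And>i. i \<in> A \<Longrightarrow> 0 \<le> w i" "\<And>i. i \<in> A \<Longrightarrow> w i \<le> W" "0 \<le> W"
  shows "(\<Sum>i\<in>A. \<bar>lt d lam i\<bar> * w i) \<le> Lsum d lam * W"
proof -
  have W: "0 \<le> W" if "A \<noteq> {}" using assms that by force
  have "(\<Sum>i\<in>A. \<bar>lt d lam i\<bar> * w i) \<le> (\<Sum>i\<in>A. \<bar>lt d lam i\<bar> * W)"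
    by (intro sum_mono mult_left_mono) (use assms in auto)
  also have "\<dots> = (\<Sum>i\<in>A. \<bar>lt d lam i\<bar>) * W" by (simp add: sum_distrib_right)
  also have "\<dots> \<le> Lsum d lam * W"
  proof (cases "A = {}")
    case True then show ?thesis using assms(4) by (simp add: Lsum_nonneg)
  next
    case False then show ?thesis using W lt_sum_bound[OF assms(1)] by (intro mult_right_mono) auto
  qed
  finally show ?thesis .
qed

lemma abs_sin_le: "\<bar>sin (t::real)\<bar> \<le> 1" and abs_cos_le: "\<bar>cos (t::real)\<bar> \<le> 1"
  by (simp_all add: abs_sin_le_one abs_cos_le_one)

lemma abs_pow_le1: "\<bar>x::real\<bar> \<le> 1 \<Longrightarrow> \<bar>x ^ n\<bar> \<le> 1"
  by (simp add: power_abs power_le_one)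

lemma EE_bound: "\<bar>EE d n t lam\<bar> \<le> BB d lam ^ n"
proof (induction n rule: less_induct)
  case (less n)
  define B where "B = BB d lam"
  have B1: "1 \<le> B" using BB_ge1 by (simp add: B_def)
  show ?case
  proof (cases n)
    case 0 then show ?thesis by simp
  next
    case (Suc m)
    have "\<bar>EE d n t lam\<bar> \<le> (\<Sum>i\<in>{1..Suc m}. \<bar>lt d lam i * cos t ^ (i+1) * EE d (Suc m - i) t lam\<bar>)"
    proof -
      have "\<bar>EE d n t lam\<bar> = \<bar>sin t\<bar> * \<bar>\<Sum>i\<in>{1..Suc m}. lt d lam i * cos t ^ (i+1) * EE d (Suc m - i) t lam\<bar>"
        using Suc by (simp add: abs_mult)
      also have "\<dots> \<le> 1 * \<bar>\<Sum>i\<in>{1..Suc m}. lt d lam i * cos t ^ (i+1) * EE d (Suc m - i) t lam\<bar>"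
        by (intro mult_right_mono abs_sin_le) simp
      also have "\<dots> \<le> (\<Sum>i\<in>{1..Suc m}. \<bar>lt d lam i * cos t ^ (i+1) * EE d (Suc m - i) t lam\<bar>)"
        unfolding mult_1 by (rule sum_abs)
      finally show ?thesis .
    qed
    also have "\<dots> \<le> (\<Sum>i\<in>{1..Suc m}. \<bar>lt d lam i\<bar> * B ^ m)"
    proof (intro sum_mono)
      fix i assume i: "i \<in> {1..Suc m}"
      have "\<bar>EE d (Suc m - i) t lam\<bar> \<le> B ^ (Suc m - i)" using less.IH[of "Suc m - i"] i Suc by (simp add: B_def)
      also have "\<dots> \<le> B ^ m" using B1 i by (intro power_increasing) auto
      finally have e: "\<bar>EE d (Suc m - i) t lam\<bar> \<le> B ^ m" .
      have c: "\<bar>cos t ^ (i+1)\<bar> \<le> 1" by (intro abs_pow_le1 abs_cos_le)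
      have "\<bar>lt d lam i * cos t ^ (i+1) * EE d (Suc m - i) t lam\<bar> = \<bar>lt d lam i\<bar> * (\<bar>cos t ^ (i+1)\<bar> * \<bar>EE d (Suc m - i) t lam\<bar>)"
        by (simp add: abs_mult)
      also have "\<dots> \<le> \<bar>lt d lam i\<bar> * (1 * B ^ m)"
        by (intro mult_left_mono mult_mono c e) auto
      finally show "\<bar>lt d lam i * cos t ^ (i+1) * EE d (Suc m - i) t lam\<bar> \<le> \<bar>lt d lam i\<bar> * B ^ m" by simp
    qed
    also have "\<dots> \<le> Lsum d lam * B ^ m"
      by (rule lt_sum_bound_w) (use B1 in auto)
    also have "\<dots> \<le> B * B ^ m"
      by (intro mult_right_mono) (use B1 in \<open>auto simp: B_def BB_def\<close>)
    finally show ?thesis using Suc by (simp add: B_def)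
  qed
qed

lemma FF_bound: "\<bar>FF d m t lam\<bar> \<le> BB d lam ^ m"
proof (cases m)
  case 0 then show ?thesis by (simp add: FF_def)
next
  case (Suc m')
  define B where "B = BB d lam"
  have B1: "1 \<le> B" using BB_ge1 by (simp add: B_def)
  have "\<bar>FF d m t lam\<bar> \<le> (\<Sum>i\<in>{1..m-1}. \<bar>lt d lam i * cos t ^ i * EE d (m-1-i) t lam\<bar>)"
  proof -
    have "\<bar>FF d m t lam\<bar> = \<bar>sin t ^ 2\<bar> * \<bar>\<Sum>i\<in>{1..m-1}. lt d lam i * cos t ^ i * EE d (m-1-i) t lam\<bar>"
      by (simp add: FF_def abs_mult)
    also have "\<dots> \<le> 1 * \<bar>\<Sum>i\<in>{1..m-1}. lt d lam i * cos t ^ i * EE d (m-1-i) t lam\<bar>"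
      by (intro mult_right_mono abs_pow_le1 abs_sin_le) simp
    also have "\<dots> \<le> (\<Sum>i\<in>{1..m-1}. \<bar>lt d lam i * cos t ^ i * EE d (m-1-i) t lam\<bar>)"
      unfolding mult_1 by (rule sum_abs)
    finally show ?thesis .
  qed
  also have "\<dots> \<le> (\<Sum>i\<in>{1..m-1}. \<bar>lt d lam i\<bar> * B ^ m')"
  proof (intro sum_mono)
    fix i assume i: "i \<in> {1..m-1}"
    have "\<bar>EE d (m-1-i) t lam\<bar> \<le> B ^ (m-1-i)" using EE_bound by (simp add: B_def)
    also have "\<dots> \<le> B ^ m'" using B1 i Suc by (intro power_increasing) auto
    finally have e: "\<bar>EE d (m-1-i) t lam\<bar> \<le> B ^ m'" .
    have c: "\<bar>cos t ^ i\<bar> \<le> 1" by (intro abs_pow_le1 abs_cos_le)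
    have "\<bar>lt d lam i * cos t ^ i * EE d (m-1-i) t lam\<bar> = \<bar>lt d lam i\<bar> * (\<bar>cos t ^ i\<bar> * \<bar>EE d (m-1-i) t lam\<bar>)"
      by (simp add: abs_mult)
    also have "\<dots> \<le> \<bar>lt d lam i\<bar> * (1 * B ^ m')"
      by (intro mult_left_mono mult_mono c e) auto
    finally show "\<bar>lt d lam i * cos t ^ i * EE d (m-1-i) t lam\<bar> \<le> \<bar>lt d lam i\<bar> * B ^ m'" by simp
  qed
  also have "\<dots> \<le> Lsum d lam * B ^ m'"
    by (rule lt_sum_bound_w) (use B1 in auto)
  also have "\<dots> \<le> B * B ^ m'"
    by (intro mult_right_mono) (use B1 in \<open>auto simp: B_def BB_def\<close>)
  finally show ?thesis using Suc by (simp add: B_def)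
qed

lemma FF_01: "FF d 0 t lam = 0" "FF d (Suc 0) t lam = 0"
  by (simp_all add: FF_def)

lemma deriv_compare:
  fixes g R :: "real \<Rightarrow> real"
  assumes dg: "\<And>t. (g has_real_derivative R t) (at t)" and g0: "g 0 = 0"
    and Rb: "\<And>t. \<bar>R t\<bar> \<le> C * exp (\<alpha> * \<bar>t\<bar>)" and al: "0 < \<alpha>" and C: "0 \<le> C"
  shows "\<bar>g t\<bar> \<le> C / \<alpha> * exp (\<alpha> * \<bar>t\<bar>)"
proof (cases "0 \<le> t")
  case True
  have "C / \<alpha> * exp (\<alpha> * 0) - s * g 0 \<le> C / \<alpha> * exp (\<alpha> * t) - s * g t" if s: "s = 1 \<or> s = -1" for s
  proof (rule DERIV_nonneg_imp_nondecreasing[OF True])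
    fix x assume x: "0 \<le> x" "x \<le> t"
    have e1: "((\<lambda>x. exp (\<alpha> * x)) has_real_derivative exp (\<alpha> * x) * \<alpha>) (at x)"
      by (rule DERIV_chain2[OF DERIV_exp DERIV_cmult_Id])
    have "((\<lambda>x. C / \<alpha> * exp (\<alpha> * x) - s * g x) has_real_derivative C / \<alpha> * (exp (\<alpha> * x) * \<alpha>) - s * R x) (at x)"
      by (rule DERIV_diff[OF DERIV_cmult[OF e1] DERIV_cmult[OF dg]])
    moreover have "0 \<le> C / \<alpha> * (exp (\<alpha> * x) * \<alpha>) - s * R x"
    proof -
      have Rx: "\<bar>R x\<bar> \<le> C * exp (\<alpha> * x)" using Rb[of x] x(1) by simp
      show ?thesis using Rx al s by (auto simp: abs_le_iff)
    qed
    ultimately show "\<exists>y. ((\<lambda>x. C / \<alpha> * exp (\<alpha> * x) - s * g x) has_real_derivative y) (at x) \<and> 0 \<le> y" by blast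
  qed
  from this[of 1] this[of "-1"] have "\<bar>g t\<bar> \<le> C / \<alpha> * exp (\<alpha> * t) - C / \<alpha>"
    using g0 by auto
  also have "\<dots> \<le> C / \<alpha> * exp (\<alpha> * \<bar>t\<bar>)" using True C al by simp
  finally show ?thesis .
next
  case False
  then have tn: "t \<le> 0" by simp
  have "C / \<alpha> * exp (- \<alpha> * t) - s * g t \<ge> C / \<alpha> * exp (- \<alpha> * 0) - s * g 0" if s: "s = 1 \<or> s = -1" for s
  proof (rule DERIV_nonpos_imp_nonincreasing[OF tn])
    fix x assume x: "t \<le> x" "x \<le> 0"
    have e1: "((\<lambda>x. exp (- \<alpha> * x)) has_real_derivative exp (- \<alpha> * x) * (- \<alpha>)) (at x)"
      by (rule DERIV_chain2[OF DERIV_exp DERIV_cmult_Id])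
    have "((\<lambda>x. C / \<alpha> * exp (- \<alpha> * x) - s * g x) has_real_derivative C / \<alpha> * (exp (- \<alpha> * x) * (- \<alpha>)) - s * R x) (at x)"
      by (rule DERIV_diff[OF DERIV_cmult[OF e1] DERIV_cmult[OF dg]])
    moreover have "C / \<alpha> * (exp (- \<alpha> * x) * (- \<alpha>)) - s * R x \<le> 0"
    proof -
      have Rx: "\<bar>R x\<bar> \<le> C * exp (- \<alpha> * x)" using Rb[of x] x(2) by (simp add: abs_of_nonpos)
      show ?thesis using Rx al s by (auto simp: abs_le_iff)
    qed
    ultimately show "\<exists>y. ((\<lambda>x. C / \<alpha> * exp (- \<alpha> * x) - s * g x) has_real_derivative y) (at x) \<and> y \<le> 0" by blast
  qed
  from this[of 1] this[of "-1"] have "\<bar>g t\<bar> \<le> C / \<alpha> * exp (- \<alpha> * t) - C / \<alpha>"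
    using g0 by auto
  also have "\<dots> \<le> C / \<alpha> * exp (\<alpha> * \<bar>t\<bar>)" using tn C al by simp
  finally show ?thesis .
qed


lemma sum_pow2_less: "(\<Sum>j\<in>{1..<k}. (2::real) ^ j) \<le> 2 ^ k"
proof -
  have "(\<Sum>j\<in>{1..<k}. (2::real) ^ j) \<le> (\<Sum>j<k. 2 ^ j)"
    by (intro sum_mono2) auto
  also have "\<dots> = 2 ^ k - 1"
    by (induction k) auto
  finally show ?thesis by simp
qed

lemma VV_bound: "\<bar>VV d k t lam\<bar> \<le> (2 * BB d lam * exp (BB d lam * \<bar>t\<bar>)) ^ k"
proof (induction k arbitrary: t rule: less_induct)
  case (less k)
  define B where "B = BB d lam"
  have B1: "1 \<le> B" using BB_ge1 by (simp add: B_def)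
  define x where "x t = exp (B * \<bar>t\<bar>)" for t
  have x1: "1 \<le> x t" for t using B1 by (simp add: x_def)
  consider "k = 0" | "k = 1" | "2 \<le> k" by linarith
  then show ?case
  proof cases
    case 1 then show ?thesis by simp
  next
    case 2
    have "1 * 1 \<le> B * x t" using B1 x1[of t] by (intro mult_mono) auto
    then have "1 \<le> 2 * B * x t" by simp
    then show ?thesis using 2 by (simp add: B_def x_def)
  next
    case 3
    define C where "C = real k * B * (2 * B) ^ k"
    have Rb: "\<bar>RR d k u lam\<bar> \<le> C * exp (real k * B * \<bar>u\<bar>)" for u
    proof -
      have "\<bar>RR d k u lam\<bar> \<le> (\<Sum>j\<in>{1..<k}. \<bar>real j * VV d j u lam * FF d (k - j + 1) u lam\<bar>)"
        unfolding RR_def abs_minus_cancel by (rule sum_abs)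
      also have "\<dots> \<le> (\<Sum>j\<in>{1..<k}. real k * x u ^ k * B ^ (k + 1) * 2 ^ j)"
      proof (intro sum_mono)
        fix j assume j: "j \<in> {1..<k}"
        have v: "\<bar>VV d j u lam\<bar> \<le> (2 * B * x u) ^ j" using less.IH[of j u] j by (simp add: B_def x_def)
        have f: "\<bar>FF d (k - j + 1) u lam\<bar> \<le> B ^ (k - j + 1)" using FF_bound[of d "k - j + 1" u lam] by (simp add: B_def)
        have "\<bar>real j * VV d j u lam * FF d (k - j + 1) u lam\<bar> = real j * \<bar>VV d j u lam\<bar> * \<bar>FF d (k - j + 1) u lam\<bar>"
          by (simp add: abs_mult)
        also have "\<dots> \<le> real k * (2 * B * x u) ^ j * B ^ (k - j + 1)"
          using j v f B1 by (intro mult_mono) auto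
        also have "(2 * B * x u) ^ j = 2 ^ j * B ^ j * x u ^ j" by (simp add: power_mult_distrib)
        also have "x u ^ j \<le> x u ^ k" using x1 j by (intro power_increasing) auto
        then have "real k * (2 ^ j * B ^ j * x u ^ j) * B ^ (k - j + 1) \<le> real k * (2 ^ j * B ^ j * x u ^ k) * B ^ (k - j + 1)"
          using B1 by (intro mult_right_mono mult_left_mono) auto
        also have "B ^ j * B ^ (k - j + 1) = B ^ (k + 1)"
          using j by (simp add: power_add[symmetric])
        then have "real k * (2 ^ j * B ^ j * x u ^ k) * B ^ (k - j + 1) = real k * x u ^ k * B ^ (k + 1) * 2 ^ j"
        proof -
          assume e: "B ^ j * B ^ (k - j + 1) = B ^ (k + 1)"
          have "real k * (2 ^ j * B ^ j * x u ^ k) * B ^ (k - j + 1) = real k * x u ^ k * (B ^ j * B ^ (k - j + 1)) * 2 ^ j"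
            by (simp only: mult_ac)
          then show ?thesis by (simp only: e)
        qed
        finally show "\<bar>real j * VV d j u lam * FF d (k - j + 1) u lam\<bar> \<le> real k * x u ^ k * B ^ (k + 1) * 2 ^ j" .
      qed
      also have "\<dots> = real k * x u ^ k * B ^ (k + 1) * (\<Sum>j\<in>{1..<k}. 2 ^ j)"
        by (simp add: sum_distrib_left)
      also have "\<dots> \<le> real k * x u ^ k * B ^ (k + 1) * 2 ^ k"
        using B1 x1[of u] by (intro mult_left_mono sum_pow2_less) auto
      also have "\<dots> = C * x u ^ k"
        by (simp add: C_def power_mult_distrib algebra_simps)
      also have "x u ^ k = exp (real k * B * \<bar>u\<bar>)"
        unfolding x_def by (simp add: exp_of_nat_mult[symmetric] mult.assoc)
      finally show ?thesis .
    qed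
    have al: "0 < real k * B" using 3 B1 by simp
    have C0: "0 \<le> C" using B1 by (simp add: C_def)
    have "\<bar>VV d k t lam\<bar> \<le> C / (real k * B) * exp (real k * B * \<bar>t\<bar>)"
      by (rule deriv_compare[OF VV_deriv _ Rb al C0]) (use 3 in \<open>simp add: VV_at0\<close>)
    also have "C / (real k * B) = (2 * B) ^ k" using al 3 B1 by (simp add: C_def)
    also have "exp (real k * B * \<bar>t\<bar>) = x t ^ k"
      unfolding x_def by (simp add: exp_of_nat_mult[symmetric] mult.assoc)
    finally show ?thesis by (simp add: B_def x_def power_mult_distrib)
  qed
qed

lemma sum_lt_restrict:
  "(\<Sum>i\<in>{1..N}. lt d lam i * h i) = (\<Sum>i\<in>{1..d}. if i \<le> N then lt d lam i * h i else 0)"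
proof -
  have "(\<Sum>i\<in>{1..N}. lt d lam i * h i) = (\<Sum>i\<in>{1..d} \<inter> {1..N}. lt d lam i * h i)"
    by (intro sum.mono_neutral_right) (auto simp: lt_def)
  also have "\<dots> = (\<Sum>i\<in>{1..d}. if i \<in> {1..N} then lt d lam i * h i else 0)"
    by (rule sum.inter_restrict) simp
  also have "\<dots> = (\<Sum>i\<in>{1..d}. if i \<le> N then lt d lam i * h i else 0)"
    by (intro sum.cong refl) auto
  finally show ?thesis .
qed

lemma pL_lt: "pL d lam x = (\<Sum>i\<in>{1..d}. lt d lam i * x ^ i)"
  unfolding pL_def by (intro sum.cong refl) (auto simp: lt_def)

lemma pL_bound:
  assumes "\<bar>x\<bar> \<le> 1"
  shows "\<bar>pL d lam x\<bar> \<le> Lsum d lam * \<bar>x\<bar>"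
proof -
  have "\<bar>pL d lam x\<bar> \<le> (\<Sum>i\<in>{1..d}. \<bar>lam i * x ^ i\<bar>)"
    unfolding pL_def by (rule sum_abs)
  also have "\<dots> \<le> (\<Sum>i\<in>{1..d}. \<bar>lam i\<bar> * \<bar>x\<bar>)"
  proof (intro sum_mono)
    fix i assume i: "i \<in> {1..d}"
    have "\<bar>x\<bar> ^ i \<le> \<bar>x\<bar> ^ 1" using assms i by (intro power_decreasing) auto
    then have "\<bar>lam i\<bar> * \<bar>x\<bar> ^ i \<le> \<bar>lam i\<bar> * \<bar>x\<bar> ^ 1" by (rule mult_left_mono) simp
    moreover have "\<bar>lam i * x ^ i\<bar> = \<bar>lam i\<bar> * \<bar>x\<bar> ^ i" by (simp add: abs_mult power_abs)
    ultimately show "\<bar>lam i * x ^ i\<bar> \<le> \<bar>lam i\<bar> * \<bar>x\<bar>" by simp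
  qed
  finally show ?thesis by (simp add: Lsum_def sum_distrib_right)
qed

lemma den_small:
  assumes "\<bar>r\<bar> * BB d lam \<le> 1/2"
  shows "\<bar>sin t * cos t * pL d lam (r * cos t)\<bar> \<le> 1/2"
proof -
  have B1: "1 \<le> BB d lam" by (rule BB_ge1)
  have r1: "\<bar>r\<bar> \<le> 1/2"
  proof -
    have "\<bar>r\<bar> * 1 \<le> \<bar>r\<bar> * BB d lam" using B1 by (intro mult_left_mono) auto
    then show ?thesis using assms by simp
  qed
  have rc: "\<bar>r * cos t\<bar> \<le> \<bar>r\<bar>"
  proof -
    have "\<bar>r\<bar> * \<bar>cos t\<bar> \<le> \<bar>r\<bar> * 1" using abs_cos_le[of t] by (rule mult_left_mono) simp
    then show ?thesis by (simp add: abs_mult)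
  qed
  have "\<bar>pL d lam (r * cos t)\<bar> \<le> Lsum d lam * \<bar>r * cos t\<bar>"
    by (rule pL_bound) (use rc r1 in auto)
  also have "\<dots> \<le> BB d lam * \<bar>r\<bar>"
    using rc Lsum_nonneg[of d lam] by (intro mult_mono) (auto simp: BB_def)
  finally have p: "\<bar>pL d lam (r * cos t)\<bar> \<le> 1/2" using assms by (simp add: mult.commute)
  have "\<bar>sin t * cos t * pL d lam (r * cos t)\<bar> = \<bar>sin t\<bar> * \<bar>cos t\<bar> * \<bar>pL d lam (r * cos t)\<bar>"
    by (simp add: abs_mult)
  also have "\<dots> \<le> 1 * 1 * (1/2)"
    using p abs_sin_le[of t] abs_cos_le[of t] by (intro mult_mono) auto
  finally show ?thesis by simp
qed

lemma EE_abs_summable: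
  assumes "\<bar>r\<bar> * BB d lam \<le> 1/2"
  shows "summable (\<lambda>n. \<bar>EE d n t lam * r ^ n\<bar>)"
proof (rule summable_comparison_test')
  show "summable (\<lambda>n. (1/2::real) ^ n)" by simp
  fix n
  have "\<bar>EE d n t lam\<bar> * \<bar>r\<bar> ^ n \<le> BB d lam ^ n * \<bar>r\<bar> ^ n"
    by (rule mult_right_mono[OF EE_bound]) simp
  then have "\<bar>EE d n t lam * r ^ n\<bar> \<le> BB d lam ^ n * \<bar>r\<bar> ^ n"
    by (simp add: abs_mult power_abs)
  also have "\<dots> = (\<bar>r\<bar> * BB d lam) ^ n" by (simp add: power_mult_distrib mult.commute)
  also have "\<dots> \<le> (1/2) ^ n" by (intro power_mono) (use assms BB_ge1[of d lam] in auto)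
  finally show "norm \<bar>EE d n t lam * r ^ n\<bar> \<le> (1/2) ^ n" by simp
qed

lemma EE_summable:
  assumes "\<bar>r\<bar> * BB d lam \<le> 1/2"
  shows "summable (\<lambda>n. EE d n t lam * r ^ n)"
  by (rule summable_rabs_cancel[OF EE_abs_summable[OF assms]])

lemma shift_sums:
  fixes f :: "nat \<Rightarrow> real"
  assumes "f sums S"
  shows "(\<lambda>n. if k \<le> n then f (n - k) else 0) sums S"
  by (rule sums_zero_iff_shift[of k "\<lambda>n. if k \<le> n then f (n - k) else 0" S, THEN iffD1]) (simp_all add: assms)

lemma EE_series:
  assumes r: "\<bar>r\<bar> * BB d lam \<le> 1/2"
  shows "(\<lambda>n. EE d n t lam * r ^ n) sums (1 / (1 - sin t * cos t * pL d lam (r * cos t)))"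
proof -
  define S where "S = (\<Sum>n. EE d n t lam * r ^ n)"
  have sS: "(\<lambda>n. EE d n t lam * r ^ n) sums S" unfolding S_def using EE_summable[OF r] by (rule summable_sums)
  then have s1: "(\<lambda>n. EE d (Suc n) t lam * r ^ Suc n) sums (S - 1)"
    using sums_Suc_iff[of "\<lambda>n. EE d n t lam * r ^ n" "S - 1"] by simp
  define a where "a i = lt d lam i * cos t ^ (i+1) * r ^ i" for i
  have tm: "(\<lambda>n. if i \<le> Suc n then lt d lam i * (cos t ^ (i+1) * EE d (Suc n - i) t lam * r ^ Suc n) else 0) sums (a i * S)"
    if i: "i \<in> {1..d}" for i
  proof -
    have "(\<lambda>n. if i - 1 \<le> n then a i * (EE d (n - (i - 1)) t lam * r ^ (n - (i - 1))) else 0) sums (a i * S)"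
      by (rule shift_sums) (rule sums_mult[OF sS])
    moreover have eqn: "(if i - 1 \<le> n then a i * (EE d (n - (i - 1)) t lam * r ^ (n - (i - 1))) else 0)
        = (if i \<le> Suc n then lt d lam i * (cos t ^ (i+1) * EE d (Suc n - i) t lam * r ^ Suc n) else 0)" for n
    proof (cases "i \<le> Suc n")
      case True
      then have c1: "i - 1 \<le> n" by simp
      have e: "Suc n = i + (n - (i - 1))" using i True by auto
      have e2: "r ^ Suc n = r ^ i * r ^ (n - (i - 1))" by (subst e) (simp only: power_add)
      have e1: "Suc n - i = n - (i - 1)" using i True by auto
      have "lt d lam i * (cos t ^ (i+1) * EE d (Suc n - i) t lam * r ^ Suc n)
          = lt d lam i * (cos t ^ (i+1) * EE d (n - (i - 1)) t lam * (r ^ i * r ^ (n - (i - 1))))"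
        by (simp only: e1 e2)
      also have "\<dots> = a i * (EE d (n - (i - 1)) t lam * r ^ (n - (i - 1)))"
        by (simp only: a_def mult_ac)
      finally show ?thesis by (simp only: if_P[OF c1] if_P[OF True])
    qed (use i in auto)
    ultimately show ?thesis by (simp only: eqn)
  qed
  have A: "(\<lambda>n. sin t * (\<Sum>i\<in>{1..d}. if i \<le> Suc n then lt d lam i * (cos t ^ (i+1) * EE d (Suc n - i) t lam * r ^ Suc n) else 0))
      sums (sin t * (\<Sum>i\<in>{1..d}. a i * S))"
    by (intro sums_mult sums_sum tm)
  have eqE: "EE d (Suc n) t lam * r ^ Suc n = sin t * (\<Sum>i\<in>{1..d}. if i \<le> Suc n then lt d lam i * (cos t ^ (i+1) * EE d (Suc n - i) t lam * r ^ Suc n) else 0)" for n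
  proof -
    have "EE d (Suc n) t lam * r ^ Suc n = sin t * (\<Sum>i\<in>{1..Suc n}. lt d lam i * (cos t ^ (i+1) * EE d (Suc n - i) t lam * r ^ Suc n))"
      by (simp only: EE.simps sum_distrib_right mult.assoc)
    then show ?thesis by (simp only: sum_lt_restrict)
  qed
  have s2: "(\<lambda>n. EE d (Suc n) t lam * r ^ Suc n) sums (sin t * (\<Sum>i\<in>{1..d}. a i * S))"
    unfolding eqE by (rule A)
  have "S - 1 = sin t * (\<Sum>i\<in>{1..d}. a i * S)" using sums_unique2[OF s1 s2] .
  also have "(\<Sum>i\<in>{1..d}. a i * S) = cos t * pL d lam (r * cos t) * S"
  proof -
    have "a i = cos t * (lt d lam i * (r * cos t) ^ i)" for i
      by (simp add: a_def power_mult_distrib algebra_simps)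
    then have "(\<Sum>i\<in>{1..d}. a i) = cos t * pL d lam (r * cos t)"
      unfolding pL_lt by (simp add: sum_distrib_left)
    then show ?thesis by (simp add: sum_distrib_right[symmetric])
  qed
  finally have eq: "S * (1 - sin t * cos t * pL d lam (r * cos t)) = 1" by (simp add: algebra_simps)
  have "\<bar>sin t * cos t * pL d lam (r * cos t)\<bar> \<le> 1/2" by (rule den_small[OF r])
  then have "1 - sin t * cos t * pL d lam (r * cos t) \<noteq> 0" by auto
  then have "S = 1 / (1 - sin t * cos t * pL d lam (r * cos t))" using eq by (simp add: eq_divide_eq)
  then show ?thesis using sS by simp
qed

lemma polar_den_ne:
  assumes r: "\<bar>r\<bar> * BB d lam \<le> 1/2"
  shows "polar_den d lam t r \<noteq> 0" "\<bar>polar_den d lam t r\<bar> \<ge> 1/2"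
  using den_small[OF r, of t] by (auto simp: polar_den_def abs_le_iff)

lemma FF_series:
  assumes r: "\<bar>r\<bar> * BB d lam \<le> 1/2"
  shows "(\<lambda>m. FF d m t lam * r ^ m) sums polar_rhs d lam t r"
proof -
  define S where "S = 1 / (1 - sin t * cos t * pL d lam (r * cos t))"
  have sS: "(\<lambda>n. EE d n t lam * r ^ n) sums S" unfolding S_def by (rule EE_series[OF r])
  define a where "a i = lt d lam i * cos t ^ i * r ^ (i+1)" for i
  have tm: "(\<lambda>m. if i \<le> m - 1 then lt d lam i * (cos t ^ i * EE d (m - 1 - i) t lam * r ^ m) else 0) sums (a i * S)"
    if i: "i \<in> {1..d}" for i
  proof -
    have "(\<lambda>m. if i + 1 \<le> m then a i * (EE d (m - (i + 1)) t lam * r ^ (m - (i + 1))) else 0) sums (a i * S)"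
      by (rule shift_sums) (rule sums_mult[OF sS])
    moreover have eqn: "(if i + 1 \<le> m then a i * (EE d (m - (i + 1)) t lam * r ^ (m - (i + 1))) else 0)
        = (if i \<le> m - 1 then lt d lam i * (cos t ^ i * EE d (m - 1 - i) t lam * r ^ m) else 0)" for m
    proof (cases "i + 1 \<le> m")
      case True
      then have c2: "i \<le> m - 1" by simp
      have e: "m = (i + 1) + (m - (i + 1))" using True by auto
      have e2: "r ^ m = r ^ (i + 1) * r ^ (m - (i + 1))" by (subst e) (simp only: power_add)
      have e1: "m - 1 - i = m - (i + 1)" by auto
      have "lt d lam i * (cos t ^ i * EE d (m - 1 - i) t lam * r ^ m)
          = lt d lam i * (cos t ^ i * EE d (m - (i + 1)) t lam * (r ^ (i + 1) * r ^ (m - (i + 1))))"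
        by (simp only: e1 e2)
      also have "\<dots> = a i * (EE d (m - (i + 1)) t lam * r ^ (m - (i + 1)))"
        by (simp only: a_def mult_ac)
      finally show ?thesis by (simp only: if_P[OF c2] if_P[OF True])
    qed (use i in auto)
    ultimately show ?thesis by (simp only: eqn)
  qed
  have A: "(\<lambda>m. - (sin t ^ 2) * (\<Sum>i\<in>{1..d}. if i \<le> m - 1 then lt d lam i * (cos t ^ i * EE d (m - 1 - i) t lam * r ^ m) else 0))
      sums (- (sin t ^ 2) * (\<Sum>i\<in>{1..d}. a i * S))"
    by (intro sums_mult sums_sum tm)
  have eqF: "FF d m t lam * r ^ m = - (sin t ^ 2) * (\<Sum>i\<in>{1..d}. if i \<le> m - 1 then lt d lam i * (cos t ^ i * EE d (m - 1 - i) t lam * r ^ m) else 0)" for m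
  proof -
    have "FF d m t lam * r ^ m = - (sin t ^ 2) * (\<Sum>i\<in>{1..m-1}. lt d lam i * (cos t ^ i * EE d (m - 1 - i) t lam * r ^ m))"
      unfolding FF_def by (simp only: sum_distrib_right mult.assoc)
    then show ?thesis by (simp only: sum_lt_restrict)
  qed
  have s2: "(\<lambda>m. FF d m t lam * r ^ m) sums (- (sin t ^ 2) * (\<Sum>i\<in>{1..d}. a i * S))"
    unfolding eqF by (rule A)
  also have "(\<Sum>i\<in>{1..d}. a i * S) = r * pL d lam (r * cos t) * S"
  proof -
    have "a i = r * (lt d lam i * (r * cos t) ^ i)" for i
      by (simp add: a_def power_mult_distrib algebra_simps)
    then have "(\<Sum>i\<in>{1..d}. a i) = r * pL d lam (r * cos t)"
      unfolding pL_lt by (simp add: sum_distrib_left)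
    then show ?thesis by (simp add: sum_distrib_right[symmetric])
  qed
  also have "- (sin t ^ 2) * (r * pL d lam (r * cos t) * S) = polar_rhs d lam t r"
  proof -
    define x where "x = sin t * cos t * pL d lam (r * cos t)"
    have pd: "polar_den d lam t r = - (1 - x)" by (simp add: polar_den_def x_def)
    have "polar_den d lam t r \<noteq> 0" by (rule polar_den_ne[OF r])
    then have nz: "1 - x \<noteq> 0" using pd by simp
    have "- (sin t ^ 2) * (r * pL d lam (r * cos t) * (1 / (1 - x))) = r * pL d lam (r * cos t) * sin t ^ 2 / (- (1 - x))"
      using nz by (simp add: divide_simps) (simp add: algebra_simps)
    then show ?thesis unfolding polar_rhs_def S_def pd x_def[symmetric] .
  qed
  finally show ?thesis .
qed

lemma pow_diff_bound:
  fixes x y :: real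
  assumes "\<bar>x\<bar> \<le> c" "\<bar>y\<bar> \<le> c"
  shows "\<bar>x ^ m - y ^ m\<bar> \<le> real m * c ^ (m - 1) * \<bar>x - y\<bar>"
proof -
  have c0: "0 \<le> c" using assms(1) by linarith
  have "x ^ m - y ^ m = (x - y) * (\<Sum>i<m. y ^ (m - Suc i) * x ^ i)"
    by (rule power_diff_sumr2)
  then have "\<bar>x ^ m - y ^ m\<bar> = \<bar>x - y\<bar> * \<bar>\<Sum>i<m. y ^ (m - Suc i) * x ^ i\<bar>"
    by (simp add: abs_mult)
  also have "\<bar>\<Sum>i<m. y ^ (m - Suc i) * x ^ i\<bar> \<le> (\<Sum>i<m. c ^ (m - 1))"
  proof -
    have "\<bar>\<Sum>i<m. y ^ (m - Suc i) * x ^ i\<bar> \<le> (\<Sum>i<m. \<bar>y ^ (m - Suc i) * x ^ i\<bar>)" by (rule sum_abs)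
    also have "\<dots> \<le> (\<Sum>i<m. c ^ (m - 1))"
    proof (intro sum_mono)
      fix i assume i: "i \<in> {..<m}"
      have "\<bar>y ^ (m - Suc i) * x ^ i\<bar> = \<bar>y\<bar> ^ (m - Suc i) * \<bar>x\<bar> ^ i" by (simp add: abs_mult power_abs)
      also have "\<dots> \<le> c ^ (m - Suc i) * c ^ i"
        using assms by (intro mult_mono power_mono) auto
      also have "\<dots> = c ^ (m - 1)" using i by (simp add: power_add[symmetric])
      finally show "\<bar>y ^ (m - Suc i) * x ^ i\<bar> \<le> c ^ (m - 1)" .
    qed
    finally show ?thesis .
  qed
  then have "\<bar>x - y\<bar> * \<bar>\<Sum>i<m. y ^ (m - Suc i) * x ^ i\<bar> \<le> \<bar>x - y\<bar> * (real m * c ^ (m - 1))"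
    by (intro mult_left_mono) auto
  finally show ?thesis by (simp add: mult_ac)
qed

lemma rhs_lip:
  assumes q: "BB d lam * c \<le> 1/4" and r: "\<bar>r\<bar> \<le> c" and r': "\<bar>r'\<bar> \<le> c"
  shows "\<bar>polar_rhs d lam t r - polar_rhs d lam t r'\<bar> \<le> 8 * BB d lam * \<bar>r - r'\<bar>"
proof -
  define B where "B = BB d lam"
  have B1: "1 \<le> B" using BB_ge1 by (simp add: B_def)
  have c0: "0 \<le> c" using r by linarith
  have rB: "\<bar>r\<bar> * BB d lam \<le> 1/2" "\<bar>r'\<bar> * BB d lam \<le> 1/2"
  proof -
    have qq: "c * BB d lam \<le> 1/4" using q by (simp add: mult.commute)
    have "\<bar>r\<bar> * BB d lam \<le> c * BB d lam" using r B1 by (intro mult_right_mono) (auto simp: B_def)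
    then show "\<bar>r\<bar> * BB d lam \<le> 1/2" using qq by linarith
    have "\<bar>r'\<bar> * BB d lam \<le> c * BB d lam" using r' B1 by (intro mult_right_mono) (auto simp: B_def)
    then show "\<bar>r'\<bar> * BB d lam \<le> 1/2" using qq by linarith
  qed
  have s1: "(\<lambda>m. FF d m t lam * r ^ m) sums polar_rhs d lam t r" by (rule FF_series[OF rB(1)])
  have s2: "(\<lambda>m. FF d m t lam * r' ^ m) sums polar_rhs d lam t r'" by (rule FF_series[OF rB(2)])
  have s: "(\<lambda>m. FF d m t lam * r ^ m - FF d m t lam * r' ^ m) sums (polar_rhs d lam t r - polar_rhs d lam t r')"
    by (rule sums_diff[OF s1 s2])
  have bnd: "\<bar>FF d m t lam * r ^ m - FF d m t lam * r' ^ m\<bar> \<le> 4 * B * \<bar>r - r'\<bar> * (1/2) ^ m" for m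
  proof (cases m)
    case 0 then show ?thesis using B1 by simp
  next
    case (Suc m')
    have "\<bar>FF d m t lam * r ^ m - FF d m t lam * r' ^ m\<bar> = \<bar>FF d m t lam\<bar> * \<bar>r ^ m - r' ^ m\<bar>"
      by (simp add: abs_mult right_diff_distrib[symmetric])
    also have "\<dots> \<le> B ^ m * (real m * c ^ (m - 1) * \<bar>r - r'\<bar>)"
      using B1 by (intro mult_mono FF_bound[of d m t lam, folded B_def] pow_diff_bound r r') auto
    also have "B ^ m * (real m * c ^ (m - 1) * \<bar>r - r'\<bar>) = 4 * B * \<bar>r - r'\<bar> * (real m * (B * c) ^ m' * (1/4))"
      using Suc by (simp add: power_mult_distrib)
    also have "real m * (B * c) ^ m' * (1/4) \<le> real m * (1/4) ^ m' * (1/4)"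
      using q c0 B1 by (intro mult_right_mono mult_left_mono power_mono) (auto simp: B_def)
    also have "real m * (1/4) ^ m' * (1/4) = real m * (1/4) ^ m" using Suc by simp
    also have "real m * (1/4::real) ^ m \<le> (1/2) ^ m"
    proof -
      have "real m \<le> 2 ^ m" using less_exp[of m] by (simp add: of_nat_le_iff[symmetric])
      then have "real m * (1/4::real) ^ m \<le> 2 ^ m * (1/4) ^ m" by (intro mult_right_mono) auto
      also have "(2::real) ^ m * (1/4) ^ m = (1/2) ^ m" by (simp add: power_mult_distrib[symmetric])
      finally show ?thesis .
    qed
    finally show ?thesis using B1 by (simp add: mult_left_mono)
  qed
  have sb: "summable (\<lambda>m. 4 * B * \<bar>r - r'\<bar> * (1/2::real) ^ m)" by simp
  have "\<bar>polar_rhs d lam t r - polar_rhs d lam t r'\<bar> \<le> (\<Sum>m. 4 * B * \<bar>r - r'\<bar> * (1/2::real) ^ m)"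
  proof -
    have "summable (\<lambda>m. \<bar>FF d m t lam * r ^ m - FF d m t lam * r' ^ m\<bar>)"
      by (rule summable_comparison_test'[OF sb]) (use bnd in simp)
    then have "\<bar>\<Sum>m. FF d m t lam * r ^ m - FF d m t lam * r' ^ m\<bar> \<le> (\<Sum>m. \<bar>FF d m t lam * r ^ m - FF d m t lam * r' ^ m\<bar>)"
      by (rule summable_rabs)
    also have "\<dots> \<le> (\<Sum>m. 4 * B * \<bar>r - r'\<bar> * (1/2::real) ^ m)"
      by (rule suminf_le[OF bnd]) (fact, fact sb)
    finally show ?thesis using sums_unique[OF s] by simp
  qed
  also have "(\<Sum>m. 4 * B * \<bar>r - r'\<bar> * (1/2::real) ^ m) = 8 * B * \<bar>r - r'\<bar>"
    by (subst suminf_mult) (auto simp: suminf_geometric)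
  finally show ?thesis by (simp add: B_def)
qed

lemma rhs_bound:
  assumes r: "\<bar>r\<bar> * BB d lam \<le> 1/2"
  shows "\<bar>polar_rhs d lam t r\<bar> \<le> 2 * BB d lam * r ^ 2"
proof -
  have B1: "1 \<le> BB d lam" by (rule BB_ge1)
  have r1: "\<bar>r\<bar> \<le> 1/2"
  proof -
    have "\<bar>r\<bar> * 1 \<le> \<bar>r\<bar> * BB d lam" using B1 by (intro mult_left_mono) auto
    then show ?thesis using r by simp
  qed
  have rc: "\<bar>r * cos t\<bar> \<le> \<bar>r\<bar>"
  proof -
    have "\<bar>r\<bar> * \<bar>cos t\<bar> \<le> \<bar>r\<bar> * 1" using abs_cos_le[of t] by (rule mult_left_mono) simp
    then show ?thesis by (simp add: abs_mult)
  qed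
  have p: "\<bar>pL d lam (r * cos t)\<bar> \<le> BB d lam * \<bar>r\<bar>"
  proof -
    have "\<bar>pL d lam (r * cos t)\<bar> \<le> Lsum d lam * \<bar>r * cos t\<bar>"
      by (rule pL_bound) (use rc r1 in auto)
    also have "\<dots> \<le> BB d lam * \<bar>r\<bar>"
      using rc Lsum_nonneg[of d lam] by (intro mult_mono) (auto simp: BB_def)
    finally show ?thesis .
  qed
  have den: "1/2 \<le> \<bar>polar_den d lam t r\<bar>" by (rule polar_den_ne(2)[OF r])
  have s2: "\<bar>sin t ^ 2\<bar> \<le> 1" by (intro abs_pow_le1 abs_sin_le)
  have "\<bar>polar_rhs d lam t r\<bar> = \<bar>r\<bar> * \<bar>pL d lam (r * cos t)\<bar> * \<bar>sin t ^ 2\<bar> / \<bar>polar_den d lam t r\<bar>"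
    by (simp add: polar_rhs_def abs_mult)
  also have "\<dots> \<le> \<bar>r\<bar> * (BB d lam * \<bar>r\<bar>) * 1 / (1/2)"
    using B1 by (intro frac_le mult_mono p s2 den mult_left_mono) auto
  also have "\<dots> = 2 * BB d lam * r ^ 2" by (simp add: power2_eq_square abs_mult_self_eq)
  finally show ?thesis .
qed

lemma rhs_cont:
  assumes "continuous_on S \<phi>" "\<And>t. t \<in> S \<Longrightarrow> polar_den d lam t (\<phi> t) \<noteq> 0"
  shows "continuous_on S (\<lambda>t. polar_rhs d lam t (\<phi> t))"
  unfolding polar_rhs_def using assms unfolding polar_den_def pL_def
  by (intro continuous_intros) auto

lemma integral_pow_0:
  assumes "0 \<le> t" shows "integral {0..t} (\<lambda>s. s ^ n) = t ^ Suc n / real (Suc n)"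
proof -
  have "((\<lambda>s. s ^ n) has_integral (t ^ Suc n / real (Suc n) - 0 ^ Suc n / real (Suc n))) {0..t}"
  proof (rule fundamental_theorem_of_calculus[OF assms])
    fix x assume "x \<in> {0..t}"
    have "((\<lambda>s. s ^ Suc n / real (Suc n)) has_real_derivative real (Suc n) * x ^ (Suc n - Suc 0) / real (Suc n)) (at x)"
      by (intro DERIV_cdivide DERIV_pow)
    then have "((\<lambda>s. s ^ Suc n / real (Suc n)) has_real_derivative x ^ n) (at x)"
      by simp
    then show "((\<lambda>s. s ^ Suc n / real (Suc n)) has_vector_derivative x ^ n) (at x within {0..t})"
      by (simp add: has_real_derivative_iff_has_vector_derivative[symmetric] has_field_derivative_at_within)
  qed
  then show ?thesis by (simp add: integral_unique)
qed

lemma le_lim: "(\<And>n. x \<le> y + c n) \<Longrightarrow> c \<longlonglongrightarrow> 0 \<Longrightarrow> x \<le> (y::real)"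
proof -
  assume a: "\<And>n. x \<le> y + c n" and c: "c \<longlonglongrightarrow> 0"
  have "(\<lambda>n. y + c n) \<longlonglongrightarrow> y + 0" by (intro tendsto_intros c)
  then have "(\<lambda>n. y + c n) \<longlonglongrightarrow> y" by simp
  then show ?thesis by (rule LIMSEQ_le_const) (use a in auto)
qed

lemma cont_indef_integral:
  fixes g :: "real \<Rightarrow> real"
  assumes "continuous_on {a..b} g"
  shows "continuous_on {a..b} (\<lambda>t. integral {a..t} g)"
proof -
  have "continuous (at t within {a..b}) (\<lambda>t. integral {a..t} g)" if "t \<in> {a..b}" for t
    by (rule DERIV_continuous[OF integral_has_real_derivative[OF assms that]])
  then show ?thesis by (simp add: continuous_on_eq_continuous_within)
qed

lemma int_abs_bound:
  fixes f g :: "real \<Rightarrow> real"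
  assumes "f integrable_on S" "g integrable_on S" "\<And>x. x \<in> S \<Longrightarrow> \<bar>f x\<bar> \<le> g x"
  shows "\<bar>integral S f\<bar> \<le> integral S g"
  using Henstock_Kurzweil_Integration.integral_norm_bound_integral[OF assms(1,2)] assms(3) by simp

primrec pic :: "nat \<Rightarrow> (nat \<Rightarrow> real) \<Rightarrow> real \<Rightarrow> nat \<Rightarrow> real \<Rightarrow> real" where
  "pic d lam r0 0 = (\<lambda>t. r0)"
| "pic d lam r0 (Suc n) = (\<lambda>t. r0 + integral {0..t} (\<lambda>s. polar_rhs d lam s (pic d lam r0 n s)))"

lemma picard_exists:
  assumes th: "0 \<le> \<theta>"
  shows "\<exists>\<epsilon>>0. \<forall>r0. \<bar>r0\<bar> < \<epsilon> \<longrightarrow> (\<exists>\<phi>. is_polar_sol d lam r0 \<phi> {0..\<theta>})"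
proof -
  define B where "B = BB d lam"
  have B1: "1 \<le> B" using BB_ge1 by (simp add: B_def)
  define \<delta> where "\<delta> = 1 / (4 * B * (\<theta> + 1))"
  have \<delta>0: "0 < \<delta>" using B1 th by (simp add: \<delta>_def)
  have q\<delta>: "B * \<delta> \<le> 1/4"
  proof -
    have "B * \<delta> = 1 / (4 * (\<theta> + 1))" using B1 th by (simp add: \<delta>_def)
    also have "\<dots> \<le> 1/4" using th by (simp add: field_simps)
    finally show ?thesis .
  qed
  have Bd: "B * \<delta> = 1 / (4 * (\<theta> + 1))" using B1 th by (simp add: \<delta>_def)
  have \<theta>\<delta>: "\<theta> * (2 * B * \<delta>^2) \<le> \<delta> / 2"
  proof -
    have "\<theta> * (2 * B * \<delta>^2) = \<delta> * (2 * \<theta> * (B * \<delta>))" by (simp add: power2_eq_square mult_ac)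
    also have "2 * \<theta> * (B * \<delta>) \<le> 1/2" using th by (simp add: Bd field_simps)
    then have "\<delta> * (2 * \<theta> * (B * \<delta>)) \<le> \<delta> * (1/2)" using \<delta>0 by (intro mult_left_mono) auto
    finally show ?thesis by simp
  qed
  show ?thesis
  proof (intro exI[of _ "\<delta>/2"] conjI allI impI)
    show "0 < \<delta>/2" using \<delta>0 by simp
    fix r0 assume r0: "\<bar>r0\<bar> < \<delta>/2"
    define S where "S = {0..\<theta>}"
    define F where "F t r = polar_rhs d lam t r" for t r
    define M where "M = 2 * B * \<delta>^2"
    define Lc where "Lc = 8 * B"
    have M0: "0 \<le> M" using B1 by (simp add: M_def)
    have Lc0: "0 < Lc" using B1 by (simp add: Lc_def)
    have rB: "\<bar>r\<bar> * BB d lam \<le> 1/2" if "\<bar>r\<bar> \<le> \<delta>" for r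
    proof -
      have "\<bar>r\<bar> * B \<le> \<delta> * B" using that B1 by (intro mult_right_mono) auto
      then show ?thesis using q\<delta> by (simp add: B_def mult.commute)
    qed
    have Fb: "\<bar>F t r\<bar> \<le> M" if "\<bar>r\<bar> \<le> \<delta>" for t r
    proof -
      have "\<bar>F t r\<bar> \<le> 2 * B * r ^ 2" unfolding F_def B_def by (rule rhs_bound[OF rB[OF that]])
      also have "r ^ 2 \<le> \<delta> ^ 2" using power_mono[OF that abs_ge_zero, of 2] by simp
      then have "2 * B * r ^ 2 \<le> 2 * B * \<delta> ^ 2" using B1 by simp
      finally show ?thesis by (simp add: M_def)
    qed
    have FL: "\<bar>F t r - F t r'\<bar> \<le> Lc * \<bar>r - r'\<bar>" if "\<bar>r\<bar> \<le> \<delta>" "\<bar>r'\<bar> \<le> \<delta>" for t r r'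
      unfolding F_def Lc_def B_def by (rule rhs_lip) (use q\<delta> that in \<open>auto simp: B_def\<close>)
    have den: "polar_den d lam t r \<noteq> 0" if "\<bar>r\<bar> \<le> \<delta>" for t r
      by (rule polar_den_ne(1)[OF rB[OF that]])
    have Fc: "continuous_on T (\<lambda>s. F s (p s))" if "continuous_on T p" "\<And>s. s \<in> T \<Longrightarrow> \<bar>p s\<bar> \<le> \<delta>" for T p
      unfolding F_def by (rule rhs_cont[OF that(1)]) (use den that(2) in auto)
    have intg: "(\<lambda>s. F s (p s)) integrable_on {0..t}" if "continuous_on S p" "\<And>s. s \<in> S \<Longrightarrow> \<bar>p s\<bar> \<le> \<delta>" "t \<in> S" for p t
      by (rule integrable_continuous_interval, rule continuous_on_subset[OF Fc[OF that(1,2)]]) (use that(3) in \<open>auto simp: S_def\<close>)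
    let ?p = "pic d lam r0"
    have inv: "continuous_on S (?p n) \<and> (\<forall>t\<in>S. \<bar>?p n t\<bar> \<le> \<delta>)" for n
    proof (induction n)
      case 0
      then show ?case using r0 by (auto intro: continuous_intros)
    next
      case (Suc n)
      then have c: "continuous_on S (?p n)" and b: "\<And>t. t \<in> S \<Longrightarrow> \<bar>?p n t\<bar> \<le> \<delta>" by auto
      have g: "continuous_on {0..\<theta>} (\<lambda>s. F s (?p n s))" using Fc[OF c b] by (simp add: S_def)
      have "continuous_on S (\<lambda>t. r0 + integral {0..t} (\<lambda>s. F s (?p n s)))"
        unfolding S_def by (intro continuous_intros cont_indef_integral g)
      moreover have "\<bar>r0 + integral {0..t} (\<lambda>s. F s (?p n s))\<bar> \<le> \<delta>" if t: "t \<in> S" for t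
      proof -
        have "\<bar>integral {0..t} (\<lambda>s. F s (?p n s))\<bar> \<le> integral {0..t} (\<lambda>s. M)"
          by (rule int_abs_bound)
             (use intg[OF c b t] t in \<open>auto intro!: Fb b simp: S_def\<close>)
        also have "\<dots> = t * M" using t by (simp add: S_def)
        also have "\<dots> \<le> \<theta> * M" using t M0 by (intro mult_right_mono) (auto simp: S_def)
        finally show ?thesis using r0 \<theta>\<delta> by (simp add: M_def)
      qed
      ultimately show ?case by (simp add: F_def)
    qed
    then have pc: "\<And>n. continuous_on S (?p n)" and pb: "\<And>n t. t \<in> S \<Longrightarrow> \<bar>?p n t\<bar> \<le> \<delta>" by auto
    have picS: "?p (Suc m) t = r0 + integral {0..t} (\<lambda>s. F s (?p m s))" for m t
      by (simp add: F_def)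
    define \<Delta> where "\<Delta> n t = ?p (Suc n) t - ?p n t" for n t
    have dif: "\<bar>\<Delta> n t\<bar> \<le> M * Lc ^ n * t ^ Suc n / fact (Suc n)" if "t \<in> S" for n t
      using that
    proof (induction n arbitrary: t)
      case 0
      have "\<bar>integral {0..t} (\<lambda>s. F s r0)\<bar> \<le> integral {0..t} (\<lambda>s. M)"
        by (rule int_abs_bound)
           (use intg[of "\<lambda>_. r0", OF _ _ 0(1)] r0 0 in \<open>auto intro!: Fb simp: S_def\<close>)
      also have "\<dots> = t * M" using 0 by (simp add: S_def)
      finally show ?case by (simp add: \<Delta>_def F_def mult.commute)
    next
      case (Suc n)
      have i1: "(\<lambda>s. F s (?p (Suc n) s)) integrable_on {0..t}" by (rule intg[OF pc pb Suc.prems])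
      have i2: "(\<lambda>s. F s (?p n s)) integrable_on {0..t}" by (rule intg[OF pc pb Suc.prems])
      have "\<Delta> (Suc n) t = integral {0..t} (\<lambda>s. F s (?p (Suc n) s)) - integral {0..t} (\<lambda>s. F s (?p n s))"
        unfolding \<Delta>_def picS[of "Suc n" t] picS[of n t] by simp
      also have "\<dots> = integral {0..t} (\<lambda>s. F s (?p (Suc n) s) - F s (?p n s))"
        by (rule Henstock_Kurzweil_Integration.integral_diff[symmetric, OF i1 i2])
      also have "\<bar>\<dots>\<bar> \<le> integral {0..t} (\<lambda>s. Lc * (M * Lc ^ n / fact (Suc n)) * s ^ Suc n)"
      proof (rule int_abs_bound)
        show "(\<lambda>s. F s (?p (Suc n) s) - F s (?p n s)) integrable_on {0..t}" by (rule integrable_diff[OF i1 i2])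
        show "(\<lambda>s. Lc * (M * Lc ^ n / fact (Suc n)) * s ^ Suc n) integrable_on {0..t}"
          by (rule integrable_continuous_interval) (intro continuous_intros)
        fix s assume s: "s \<in> {0..t}"
        then have sS: "s \<in> S" using Suc.prems by (auto simp: S_def)
        have "\<bar>F s (?p (Suc n) s) - F s (?p n s)\<bar> \<le> Lc * \<bar>?p (Suc n) s - ?p n s\<bar>"
          by (rule FL[OF pb[OF sS] pb[OF sS]])
        also have "\<dots> \<le> Lc * (M * Lc ^ n * s ^ Suc n / fact (Suc n))"
          by (rule mult_left_mono[OF Suc.IH[OF sS, unfolded \<Delta>_def]]) (use Lc0 in simp)
        finally show "\<bar>F s (?p (Suc n) s) - F s (?p n s)\<bar> \<le> Lc * (M * Lc ^ n / fact (Suc n)) * s ^ Suc n"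
          by (simp add: field_simps)
      qed
      also have "\<dots> = Lc * (M * Lc ^ n / fact (Suc n)) * (t ^ Suc (Suc n) / real (Suc (Suc n)))"
        using Suc.prems integral_pow_0[of t "Suc n"] by (simp add: S_def)
      also have "\<dots> = M * Lc ^ Suc n * t ^ Suc (Suc n) / fact (Suc (Suc n))"
        by (simp add: field_simps)
      finally show ?case .
    qed
    define b where "b n = M * Lc ^ n * \<theta> ^ Suc n / fact (Suc n)" for n
    have db: "\<bar>\<Delta> n t\<bar> \<le> b n" if "t \<in> S" for n t
    proof -
      have "t ^ Suc n \<le> \<theta> ^ Suc n" using that by (intro power_mono) (auto simp: S_def)
      then have "M * Lc ^ n * t ^ Suc n / fact (Suc n) \<le> M * Lc ^ n * \<theta> ^ Suc n / fact (Suc n)"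
        using M0 Lc0 by (intro divide_right_mono mult_left_mono) auto
      then show ?thesis using dif[OF that, of n] by (simp add: b_def)
    qed
    have b0: "0 \<le> b n" for n using M0 Lc0 th by (simp add: b_def)
    have bs: "summable b"
    proof -
      have "summable (\<lambda>n. inverse (fact n) * (Lc * \<theta>) ^ n)" by (rule summable_exp)
      then have "summable (\<lambda>n. inverse (fact (Suc n)) * (Lc * \<theta>) ^ Suc n)" by (subst summable_Suc_iff)
      then have "summable (\<lambda>n. (M / Lc) * (inverse (fact (Suc n)) * (Lc * \<theta>) ^ Suc n))" by (rule summable_mult)
      moreover have "(M / Lc) * (inverse (fact (Suc n)) * (Lc * \<theta>) ^ Suc n) = b n" for n
        using Lc0 by (simp add: b_def power_mult_distrib field_simps)
      ultimately show ?thesis by simp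
    qed
    define \<tau> where "\<tau> = (\<lambda>n. suminf b - (\<Sum>j<n. b j))"
    have \<tau>0: "\<tau> \<longlonglongrightarrow> 0"
    proof -
      have "(\<lambda>n. suminf b - (\<Sum>j<n. b j)) \<longlonglongrightarrow> suminf b - suminf b"
        by (intro tendsto_intros summable_LIMSEQ bs)
      then show ?thesis by (simp add: \<tau>_def)
    qed
    have \<tau>nn: "0 \<le> \<tau> n" for n
      using suminf_minus_initial_segment[OF bs, of n] suminf_nonneg[of "\<lambda>j. b (j + n)"] bs b0
      by (simp add: \<tau>_def summable_iff_shift)
    define \<phi> where "\<phi> t = r0 + (\<Sum>n. \<Delta> n t)" for t
    have \<Delta>s: "summable (\<lambda>n. \<Delta> n t)" if "t \<in> S" for t
      by (rule summable_comparison_test'[OF bs]) (use db[OF that] in simp)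
    have pic_tel: "?p n t = r0 + (\<Sum>j<n. \<Delta> j t)" for n t
      unfolding \<Delta>_def by (subst sum_lessThan_telescope) simp
    have close: "\<bar>\<phi> t - ?p n t\<bar> \<le> \<tau> n" if t: "t \<in> S" for n t
    proof -
      have "\<phi> t - ?p n t = (\<Sum>j. \<Delta> (j + n) t)"
        unfolding \<phi>_def pic_tel using suminf_minus_initial_segment[OF \<Delta>s[OF t], of n] by simp
      also have "\<bar>\<dots>\<bar> \<le> (\<Sum>j. b (j + n))"
      proof -
        have s1: "summable (\<lambda>j. b (j + n))" using bs by (simp add: summable_iff_shift)
        have s2: "summable (\<lambda>j. \<bar>\<Delta> (j + n) t\<bar>)" by (rule summable_comparison_test'[OF s1]) (use db[OF t] in simp)
        have "\<bar>\<Sum>j. \<Delta> (j + n) t\<bar> \<le> (\<Sum>j. \<bar>\<Delta> (j + n) t\<bar>)" by (rule summable_rabs[OF s2])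
        also have "\<dots> \<le> (\<Sum>j. b (j + n))" by (rule suminf_le) (use db[OF t] s1 s2 in auto)
        finally show ?thesis .
      qed
      also have "\<dots> = \<tau> n" unfolding \<tau>_def by (rule suminf_minus_initial_segment[OF bs])
      finally show ?thesis .
    qed
    have \<phi>c: "continuous_on S \<phi>"
    proof (rule uniform_limit_theorem[of _ ?p])
      show "\<forall>\<^sub>F n in sequentially. continuous_on S (?p n)" using pc by simp
      show "uniform_limit S ?p \<phi> sequentially"
      proof (rule uniform_limitI)
        fix e :: real assume e: "0 < e"
        have "\<forall>\<^sub>F n in sequentially. \<tau> n < e" using order_tendstoD(2)[OF \<tau>0 e] .
        then show "\<forall>\<^sub>F n in sequentially. \<forall>t\<in>S. dist (?p n t) (\<phi> t) < e"
        proof eventually_elim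
          case (elim n)
          show ?case
          proof
            fix t assume t: "t \<in> S"
            have "dist (?p n t) (\<phi> t) = \<bar>\<phi> t - ?p n t\<bar>" by (simp add: dist_real_def abs_minus_commute)
            then show "dist (?p n t) (\<phi> t) < e" using close[OF t, of n] elim by linarith
          qed
        qed
      qed
    qed simp
    have \<phi>b: "\<bar>\<phi> t\<bar> \<le> \<delta>" if t: "t \<in> S" for t
    proof (rule le_lim[OF _ \<tau>0])
      fix n show "\<bar>\<phi> t\<bar> \<le> \<delta> + \<tau> n" using close[OF t, of n] pb[OF t, of n] by linarith
    qed
    define G where "G s = F s (\<phi> s)" for s
    have Gc: "continuous_on S G" unfolding G_def by (rule Fc[OF \<phi>c \<phi>b])
    have inteq: "\<phi> t = r0 + integral {0..t} G" if t: "t \<in> S" for t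
    proof -
      have "\<bar>\<phi> t - (r0 + integral {0..t} G)\<bar> \<le> 0 + (\<tau> (Suc n) + Lc * \<theta> * \<tau> n)" for n
      proof -
        have iG: "G integrable_on {0..t}" unfolding G_def by (rule intg[OF \<phi>c \<phi>b t])
        have ip: "(\<lambda>s. F s (?p n s)) integrable_on {0..t}" by (rule intg[OF pc pb t])
        have "\<bar>integral {0..t} (\<lambda>s. F s (?p n s)) - integral {0..t} G\<bar> = \<bar>integral {0..t} (\<lambda>s. F s (?p n s) - G s)\<bar>"
          by (simp add: Henstock_Kurzweil_Integration.integral_diff[OF ip iG])
        also have "\<dots> \<le> integral {0..t} (\<lambda>s. Lc * \<tau> n)"
        proof (rule int_abs_bound)
          show "(\<lambda>s. F s (?p n s) - G s) integrable_on {0..t}" by (rule integrable_diff[OF ip iG])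
          show "(\<lambda>s. Lc * \<tau> n) integrable_on {0..t}" by (rule integrable_const_ivl)
          fix s assume s: "s \<in> {0..t}"
          then have sS: "s \<in> S" using t by (auto simp: S_def)
          have "\<bar>F s (?p n s) - G s\<bar> \<le> Lc * \<bar>?p n s - \<phi> s\<bar>" unfolding G_def by (rule FL[OF pb[OF sS] \<phi>b[OF sS]])
          also have "\<dots> \<le> Lc * \<tau> n" using close[OF sS, of n] Lc0 by (intro mult_left_mono) (auto simp: abs_minus_commute)
          finally show "\<bar>F s (?p n s) - G s\<bar> \<le> Lc * \<tau> n" .
        qed
        also have "\<dots> = t * (Lc * \<tau> n)" using t by (simp add: S_def)
        also have "\<dots> \<le> \<theta> * (Lc * \<tau> n)" using t Lc0 \<tau>nn[of n] by (intro mult_right_mono) (auto simp: S_def)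
        finally have i: "\<bar>integral {0..t} (\<lambda>s. F s (?p n s)) - integral {0..t} G\<bar> \<le> Lc * \<theta> * \<tau> n" by (simp add: mult_ac)
        have "?p (Suc n) t = r0 + integral {0..t} (\<lambda>s. F s (?p n s))" by (simp add: F_def)
        then show ?thesis using i close[OF t, of "Suc n"] by linarith
      qed
      then have "\<bar>\<phi> t - (r0 + integral {0..t} G)\<bar> \<le> 0"
      proof (rule le_lim)
        show "(\<lambda>n. \<tau> (Suc n) + Lc * \<theta> * \<tau> n) \<longlonglongrightarrow> 0"
          using tendsto_add[OF LIMSEQ_Suc[OF \<tau>0] tendsto_mult_right_zero[OF \<tau>0, of "Lc * \<theta>"]]
          by (simp add: mult_ac)
      qed
      then show ?thesis by simp
    qed
    show "\<exists>\<phi>. is_polar_sol d lam r0 \<phi> {0..\<theta>}"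
    proof (intro exI[of _ \<phi>])
      have "\<phi> 0 = r0" using inteq[of 0] th by (simp add: S_def)
      moreover have "polar_den d lam t (\<phi> t) \<noteq> 0 \<and> (\<phi> has_real_derivative polar_rhs d lam t (\<phi> t)) (at t within {0..\<theta>})"
        if t: "t \<in> {0..\<theta>}" for t
      proof
        show "polar_den d lam t (\<phi> t) \<noteq> 0" using den \<phi>b t by (simp add: S_def)
        have "((\<lambda>u. r0 + integral {0..u} G) has_real_derivative 0 + G t) (at t within {0..\<theta>})"
          by (intro DERIV_add DERIV_const integral_has_real_derivative t) (use Gc in \<open>simp add: S_def\<close>)
        moreover have "G t = polar_rhs d lam t (\<phi> t)" by (simp add: G_def F_def)
        ultimately have "((\<lambda>u. r0 + integral {0..u} G) has_real_derivative polar_rhs d lam t (\<phi> t)) (at t within {0..\<theta>})" by simp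
        then show "(\<phi> has_real_derivative polar_rhs d lam t (\<phi> t)) (at t within {0..\<theta>})"
          by (rule has_field_derivative_transform_within[of _ _ _ _ 1]) (use t inteq in \<open>auto simp: S_def G_def F_def\<close>)
      qed
      ultimately show "is_polar_sol d lam r0 \<phi> {0..\<theta>}"
        unfolding is_polar_sol_def using th by auto
    qed
  qed
qed

lemma pL_neg: "pL d (\<lambda>i. - lam i) x = - pL d lam x"
  by (simp add: pL_def sum_negf)

lemma den_neg: "polar_den d (\<lambda>i. - lam i) (- t) r = polar_den d lam t r"
  by (simp add: polar_den_def pL_neg)

lemma rhs_neg: "polar_rhs d (\<lambda>i. - lam i) (- t) r = - polar_rhs d lam t r"
  by (simp add: polar_rhs_def den_neg pL_neg)

lemma exist_all:
  "\<exists>\<epsilon>>0. \<forall>r0. \<bar>r0\<bar> < \<epsilon> \<longrightarrow> (\<exists>\<phi> I. is_polar_sol d lam r0 \<phi> I \<and> \<theta> \<in> I)"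
proof (cases "0 \<le> \<theta>")
  case True
  from picard_exists[OF True, of d lam] obtain \<epsilon> where e: "\<epsilon> > 0"
    "\<forall>r0. \<bar>r0\<bar> < \<epsilon> \<longrightarrow> (\<exists>\<phi>. is_polar_sol d lam r0 \<phi> {0..\<theta>})" by blast
  show ?thesis
  proof (intro exI[of _ \<epsilon>] conjI allI impI)
    show "0 < \<epsilon>" by fact
    fix r0 assume "\<bar>r0\<bar> < \<epsilon>"
    then obtain \<phi> where "is_polar_sol d lam r0 \<phi> {0..\<theta>}" using e by blast
    then show "\<exists>\<phi> I. is_polar_sol d lam r0 \<phi> I \<and> \<theta> \<in> I"
      by (intro exI[of _ \<phi>] exI[of _ "{0..\<theta>}"]) (use True in auto)
  qed
next
  case False
  then have th: "0 \<le> - \<theta>" by simp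
  from picard_exists[OF th, of d "\<lambda>i. - lam i"] obtain \<epsilon> where e: "\<epsilon> > 0"
    "\<forall>r0. \<bar>r0\<bar> < \<epsilon> \<longrightarrow> (\<exists>\<phi>. is_polar_sol d (\<lambda>i. - lam i) r0 \<phi> {0..-\<theta>})" by blast
  show ?thesis
  proof (intro exI[of _ \<epsilon>] conjI allI impI)
    show "0 < \<epsilon>" by fact
    fix r0 assume r0: "\<bar>r0\<bar> < \<epsilon>"
    then obtain \<phi> where p: "is_polar_sol d (\<lambda>i. - lam i) r0 \<phi> {0..-\<theta>}" using e by blast
    define \<psi> where "\<psi> = \<phi> \<circ> uminus"
    have "is_polar_sol d lam r0 \<psi> {\<theta>..0}"
      unfolding is_polar_sol_def
    proof (intro conjI ballI)
      show "is_interval {\<theta>..0}" by (rule is_interval_cc)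
      show "0 \<in> {\<theta>..0}" using False by simp
      show "\<psi> 0 = r0" using p by (simp add: is_polar_sol_def \<psi>_def)
      fix t assume t: "t \<in> {\<theta>..0}"
      then have mt: "- t \<in> {0..-\<theta>}" by simp
      have pd: "polar_den d (\<lambda>i. - lam i) (- t) (\<phi> (- t)) \<noteq> 0 \<and>
           (\<phi> has_real_derivative polar_rhs d (\<lambda>i. - lam i) (- t) (\<phi> (- t))) (at (- t) within {0..-\<theta>})"
        using p mt unfolding is_polar_sol_def by blast
      show "polar_den d lam t (\<psi> t) \<noteq> 0" using pd by (simp add: \<psi>_def den_neg)
      have "(\<phi> has_real_derivative polar_rhs d (\<lambda>i. - lam i) (- t) (\<phi> (- t))) (at (uminus t) within (uminus ` {\<theta>..0}))"
        using pd by simp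
      from DERIV_image_chain[OF this DERIV_minus[OF DERIV_ident]]
      show "(\<psi> has_real_derivative polar_rhs d lam t (\<psi> t)) (at t within {\<theta>..0})"
        by (simp add: \<psi>_def rhs_neg)
    qed
    then show "\<exists>\<phi> I. is_polar_sol d lam r0 \<phi> I \<and> \<theta> \<in> I" using False by (intro exI[of _ \<psi>] exI[of _ "{\<theta>..0}"]) auto
  qed
qed

lemma poly_ident:
  "(\<Sum>k\<le>N. RR d k t lam * x ^ k) +
   (\<Sum>k\<le>N. VV d k t lam * (real k * x ^ (k - 1) * (\<Sum>m\<le>N + 1 - k. FF d m t lam * x ^ m))) = 0"
proof (induction N)
  case 0
  show ?case by (simp add: RR_def)
next
  case (Suc N)
  define P where "P M = (\<Sum>m\<le>M. FF d m t lam * x ^ m)" for M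
  have Psuc: "P (Suc N + 1 - k) = P (N + 1 - k) + FF d (N + 2 - k) t lam * x ^ (N + 2 - k)" if "k \<le> N" for k
  proof -
    have "Suc N + 1 - k = Suc (N + 1 - k)" "N + 2 - k = Suc (N + 1 - k)" using that by auto
    then show ?thesis unfolding P_def by simp
  qed
  have P1: "P 1 = 0" by (simp add: P_def FF_01)
  have tm: "VV d k t lam * (real k * x ^ (k - 1) * (FF d (N + 2 - k) t lam * x ^ (N + 2 - k)))
      = real k * VV d k t lam * FF d (N + 2 - k) t lam * x ^ Suc N" if "k \<le> N" for k
  proof (cases k)
    case (Suc k')
    have "x ^ (k - 1) * x ^ (N + 2 - k) = x ^ Suc N"
      using that Suc by (simp add: power_add[symmetric])
    then show ?thesis by (simp add: algebra_simps)
  qed simp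
  have sRR: "(\<Sum>k\<le>N. real k * VV d k t lam * FF d (N + 2 - k) t lam) = - RR d (Suc N) t lam"
  proof -
    have "(\<Sum>k\<le>N. real k * VV d k t lam * FF d (N + 2 - k) t lam) = (\<Sum>k\<in>{1..N}. real k * VV d k t lam * FF d (N + 2 - k) t lam)"
      by (rule sum.mono_neutral_right) auto
    also have "\<dots> = (\<Sum>j\<in>{1..<Suc N}. real j * VV d j t lam * FF d (Suc N - j + 1) t lam)"
    proof (rule sum.cong)
      show "{1..N} = {1..<Suc N}" by auto
      fix j assume "j \<in> {1..<Suc N}"
      then have "N + 2 - j = Suc N - j + 1" by auto
      then show "real j * VV d j t lam * FF d (N + 2 - j) t lam = real j * VV d j t lam * FF d (Suc N - j + 1) t lam" by simp
    qed
    finally show ?thesis by (simp add: RR_def)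
  qed
  have "(\<Sum>k\<le>Suc N. VV d k t lam * (real k * x ^ (k - 1) * P (Suc N + 1 - k)))
      = (\<Sum>k\<le>N. VV d k t lam * (real k * x ^ (k - 1) * P (Suc N + 1 - k)))"
    using P1 by simp
  also have "\<dots> = (\<Sum>k\<le>N. VV d k t lam * (real k * x ^ (k - 1) * P (N + 1 - k)))
      + (\<Sum>k\<le>N. real k * VV d k t lam * FF d (N + 2 - k) t lam * x ^ Suc N)"
  proof -
    have "VV d k t lam * (real k * x ^ (k - 1) * P (Suc N + 1 - k)) =
        VV d k t lam * (real k * x ^ (k - 1) * P (N + 1 - k)) + real k * VV d k t lam * FF d (N + 2 - k) t lam * x ^ Suc N"
      if "k \<in> {..N}" for k
      using that Psuc[of k] tm[of k] by (simp add: algebra_simps)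
    then show ?thesis by (simp add: sum.distrib)
  qed
  also have "(\<Sum>k\<le>N. real k * VV d k t lam * FF d (N + 2 - k) t lam * x ^ Suc N) = - RR d (Suc N) t lam * x ^ Suc N"
    using sRR by (simp add: sum_distrib_right[symmetric])
  finally have e: "(\<Sum>k\<le>Suc N. VV d k t lam * (real k * x ^ (k - 1) * P (Suc N + 1 - k)))
     = (\<Sum>k\<le>N. VV d k t lam * (real k * x ^ (k - 1) * P (N + 1 - k))) - RR d (Suc N) t lam * x ^ Suc N" by simp
  have "(\<Sum>k\<le>Suc N. RR d k t lam * x ^ k) = (\<Sum>k\<le>N. RR d k t lam * x ^ k) + RR d (Suc N) t lam * x ^ Suc N" by simp
  then show ?case using Suc.IH e unfolding P_def by simp
qed

lemma tail_bound:
  assumes x: "\<bar>x\<bar> * BB d lam \<le> 1/4"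
  shows "\<bar>polar_rhs d lam t x - (\<Sum>m\<le>M. FF d m t lam * x ^ m)\<bar> \<le> 2 * (BB d lam * \<bar>x\<bar>) ^ Suc M"
proof -
  define q where "q = BB d lam * \<bar>x\<bar>"
  have q0: "0 \<le> q" using BB_ge1[of d lam] by (simp add: q_def)
  have q1: "q \<le> 1/4" using x by (simp add: q_def mult.commute)
  have xB: "\<bar>x\<bar> * BB d lam \<le> 1/2" using x by simp
  define f where "f m = FF d m t lam * x ^ m" for m
  have s: "f sums polar_rhs d lam t x" unfolding f_def by (rule FF_series[OF xB])
  have fs: "summable f" using s by (rule sums_summable)
  have fb: "\<bar>f m\<bar> \<le> q ^ m" for m
  proof -
    have "\<bar>f m\<bar> = \<bar>FF d m t lam\<bar> * \<bar>x\<bar> ^ m" by (simp add: f_def abs_mult power_abs)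
    also have "\<dots> \<le> BB d lam ^ m * \<bar>x\<bar> ^ m" by (rule mult_right_mono[OF FF_bound]) simp
    finally show ?thesis by (simp add: q_def power_mult_distrib)
  qed
  have gs: "summable (\<lambda>j. q ^ (j + Suc M))"
    using q0 q1 by (simp add: power_add summable_mult2)
  have "polar_rhs d lam t x - (\<Sum>m\<le>M. f m) = (\<Sum>j. f (j + Suc M))"
    using suminf_minus_initial_segment[OF fs, of "Suc M"] sums_unique[OF s] by (simp add: lessThan_Suc_atMost)
  also have "\<bar>\<dots>\<bar> \<le> (\<Sum>j. q ^ (j + Suc M))"
  proof -
    have a: "summable (\<lambda>j. \<bar>f (j + Suc M)\<bar>)" by (rule summable_comparison_test'[OF gs]) (simp only: real_norm_def abs_abs fb)
    have "\<bar>\<Sum>j. f (j + Suc M)\<bar> \<le> (\<Sum>j. \<bar>f (j + Suc M)\<bar>)" by (rule summable_rabs[OF a])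
    also have "\<dots> \<le> (\<Sum>j. q ^ (j + Suc M))" by (rule suminf_le[OF _ a gs]) (rule fb)
    finally show ?thesis .
  qed
  also have "(\<Sum>j. q ^ (j + Suc M)) = q ^ Suc M * (1 / (1 - q))"
  proof -
    have "(\<Sum>j. q ^ (j + Suc M)) = (\<Sum>j. q ^ Suc M * q ^ j)" by (intro arg_cong[where f=suminf] ext) (simp add: power_add mult_ac)
    also have "\<dots> = q ^ Suc M * (\<Sum>j. q ^ j)" using q0 q1 by (intro suminf_mult) simp
    also have "(\<Sum>j. q ^ j) = 1 / (1 - q)" using q0 q1 by (intro suminf_geometric) simp
    finally show ?thesis .
  qed
  also have "\<dots> \<le> q ^ Suc M * 2"
    using q0 q1 by (intro mult_left_mono) (auto simp: field_simps)
  finally show ?thesis unfolding f_def q_def by (simp add: mult.commute)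
qed

lemma VV_bound_T:
  assumes "\<bar>t\<bar> \<le> T"
  shows "\<bar>VV d k t lam\<bar> \<le> (2 * BB d lam * exp (BB d lam * T)) ^ k"
proof -
  have B1: "1 \<le> BB d lam" by (rule BB_ge1)
  have "2 * BB d lam * exp (BB d lam * \<bar>t\<bar>) \<le> 2 * BB d lam * exp (BB d lam * T)"
    using assms B1 by (intro mult_left_mono) auto
  then have "(2 * BB d lam * exp (BB d lam * \<bar>t\<bar>)) ^ k \<le> (2 * BB d lam * exp (BB d lam * T)) ^ k"
    using B1 by (intro power_mono) auto
  then show ?thesis using VV_bound[of d k t lam] by linarith
qed

lemma seg_abs: "u \<in> closed_segment 0 \<theta> \<Longrightarrow> \<bar>u\<bar> \<le> \<bar>(\<theta>::real)\<bar>"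
  by (auto simp: closed_segment_eq_real_ivl split: if_splits)

lemma err_lim: "(\<lambda>N. 2 * a * (real N + 1) ^ 2 * (1/4::real) ^ (N + 1)) \<longlonglongrightarrow> 0"
  by real_asymp

lemma conserve:
  assumes sol: "is_polar_sol d lam r0 \<psi> I" and thI: "\<theta> \<in> I" and T: "\<bar>\<theta>\<bar> \<le> T"
    and a\<delta>: "(2 * BB d lam * exp (BB d lam * T)) * \<delta> \<le> 1/4"
    and sm: "\<And>u. u \<in> closed_segment 0 \<theta> \<Longrightarrow> \<bar>\<psi> u\<bar> \<le> \<delta>"
  shows "(\<lambda>k. VV d k \<theta> lam * \<psi> \<theta> ^ k) sums r0"
proof -
  define B where "B = BB d lam"
  define a where "a = 2 * B * exp (B * T)"
  have B1: "1 \<le> B" using BB_ge1 by (simp add: B_def)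
  have T0: "0 \<le> T" using T by linarith
  have aB: "B \<le> a"
  proof -
    have e1: "1 \<le> exp (B * T)" using B1 T0 by simp
    then have "B * 1 \<le> B * exp (B * T)" using B1 by (intro mult_left_mono) auto
    then have "B \<le> B * exp (B * T)" by simp
    moreover have "0 \<le> B * exp (B * T)" using B1 by simp
    moreover have "a = 2 * (B * exp (B * T))" by (simp add: a_def)
    ultimately show ?thesis by linarith
  qed
  have a0: "0 < a" using aB B1 by simp
  have \<delta>0: "0 \<le> \<delta>" using sm[of 0] by auto
  have ad: "a * \<delta> \<le> 1/4" using a\<delta> by (simp add: a_def B_def)
  have Bd: "B * \<delta> \<le> 1/4" using mult_right_mono[OF aB \<delta>0] ad by linarith
  define S where "S = closed_segment 0 \<theta>"
  have int: "is_interval I" and zI: "0 \<in> I" and r0: "\<psi> 0 = r0"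
    and \<psi>d: "\<And>u. u \<in> I \<Longrightarrow> (\<psi> has_real_derivative polar_rhs d lam u (\<psi> u)) (at u within I)"
    using sol by (auto simp: is_polar_sol_def)
  have SI: "S \<subseteq> I" unfolding S_def by (rule closed_segment_subset[OF zI thI is_interval_convex[OF int]])
  have Vb: "\<bar>VV d k u lam\<bar> \<le> a ^ k" if "u \<in> S" for k u
    using VV_bound_T[of u T d k lam] seg_abs[of u \<theta>] that T by (simp add: S_def a_def B_def)
  define Fp where "Fp u = polar_rhs d lam u (\<psi> u)" for u
  define D where "D N u = (\<Sum>k\<le>N. VV d k u lam * \<psi> u ^ k)" for N u
  define D' where "D' N u = (\<Sum>k\<le>N. RR d k u lam * \<psi> u ^ k + VV d k u lam * (real k * \<psi> u ^ (k - 1) * Fp u))" for N u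
  have Dd: "(D N has_real_derivative D' N u) (at u within I)" if u: "u \<in> I" for N u
  proof -
    have "((\<lambda>u. VV d k u lam * \<psi> u ^ k) has_real_derivative RR d k u lam * \<psi> u ^ k + VV d k u lam * (real k * \<psi> u ^ (k - 1) * Fp u)) (at u within I)" for k
    proof -
      have v: "((\<lambda>u. VV d k u lam) has_real_derivative RR d k u lam) (at u within I)"
        by (rule has_field_derivative_at_within[OF VV_deriv])
      have p: "((\<lambda>u. \<psi> u ^ k) has_real_derivative real k * \<psi> u ^ (k - 1) * Fp u) (at u within I)"
        by (rule DERIV_cong[OF DERIV_power[OF \<psi>d[OF u]]]) (simp add: Fp_def mult_ac)
      show ?thesis by (rule DERIV_cong[OF DERIV_mult[OF v p]]) (simp add: mult_ac)
    qed
    then show ?thesis unfolding D_def D'_def by (intro DERIV_sum)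
  qed
  define err where "err N = 2 * a * (real N + 1) ^ 2 * (1/4::real) ^ (N + 1)" for N
  have D'b: "\<bar>D' N u\<bar> \<le> err N" if u: "u \<in> S" for N u
  proof -
    define x where "x = \<psi> u"
    have xd: "\<bar>x\<bar> \<le> \<delta>" using sm u by (simp add: x_def S_def)
    have xB: "\<bar>x\<bar> * BB d lam \<le> 1/4"
    proof -
      have "\<bar>x\<bar> * B \<le> \<delta> * B" using xd B1 by (intro mult_right_mono) auto
      then show ?thesis using Bd by (simp add: B_def mult.commute)
    qed
    define P where "P M = (\<Sum>m\<le>M. FF d m u lam * x ^ m)" for M
    have id: "(\<Sum>k\<le>N. RR d k u lam * x ^ k) + (\<Sum>k\<le>N. VV d k u lam * (real k * x ^ (k - 1) * P (N + 1 - k))) = 0"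
      unfolding P_def by (rule poly_ident)
    have "D' N u = (\<Sum>k\<le>N. RR d k u lam * x ^ k) + (\<Sum>k\<le>N. VV d k u lam * (real k * x ^ (k - 1) * Fp u))"
      by (simp add: D'_def x_def sum.distrib)
    also have "\<dots> = (\<Sum>k\<le>N. VV d k u lam * (real k * x ^ (k - 1) * (Fp u - P (N + 1 - k))))"
    proof -
      have "(\<Sum>k\<le>N. VV d k u lam * (real k * x ^ (k - 1) * (Fp u - P (N + 1 - k))))
          = (\<Sum>k\<le>N. VV d k u lam * (real k * x ^ (k - 1) * Fp u)) - (\<Sum>k\<le>N. VV d k u lam * (real k * x ^ (k - 1) * P (N + 1 - k)))"
        by (simp only: right_diff_distrib sum_subtractf)
      then show ?thesis using id by linarith
    qed
    finally have De: "D' N u = (\<Sum>k\<le>N. VV d k u lam * (real k * x ^ (k - 1) * (Fp u - P (N + 1 - k))))" .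
    have tb: "\<bar>VV d k u lam * (real k * x ^ (k - 1) * (Fp u - P (N + 1 - k)))\<bar> \<le> 2 * real N * a * (1/4) ^ (N + 1)"
      if k: "k \<in> {..N}" for k
    proof (cases k)
      case 0 then show ?thesis using a0 by simp
    next
      case (Suc k')
      have t1: "\<bar>Fp u - P (N + 1 - k)\<bar> \<le> 2 * (B * \<delta>) ^ (N + 2 - k)"
      proof -
        have "\<bar>Fp u - P (N + 1 - k)\<bar> \<le> 2 * (BB d lam * \<bar>x\<bar>) ^ Suc (N + 1 - k)"
          unfolding Fp_def P_def x_def[symmetric] by (rule tail_bound[OF xB])
        also have "Suc (N + 1 - k) = N + 2 - k" using k by auto
        also have "(BB d lam * \<bar>x\<bar>) ^ (N + 2 - k) \<le> (B * \<delta>) ^ (N + 2 - k)"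
          using xd B1 by (intro power_mono mult_left_mono) (auto simp: B_def)
        finally show ?thesis by simp
      qed
      have "\<bar>VV d k u lam * (real k * x ^ (k - 1) * (Fp u - P (N + 1 - k)))\<bar>
          = \<bar>VV d k u lam\<bar> * real k * \<bar>x\<bar> ^ (k - 1) * \<bar>Fp u - P (N + 1 - k)\<bar>"
        by (simp add: abs_mult power_abs)
      also have "\<dots> \<le> a ^ k * real N * \<delta> ^ (k - 1) * (2 * (a * \<delta>) ^ (N + 2 - k))"
      proof (intro mult_mono)
        show "\<bar>VV d k u lam\<bar> \<le> a ^ k" by (rule Vb[OF u])
        show "real k \<le> real N" using k by simp
        show "\<bar>x\<bar> ^ (k - 1) \<le> \<delta> ^ (k - 1)" using xd by (intro power_mono) auto
        have "(B * \<delta>) ^ (N + 2 - k) \<le> (a * \<delta>) ^ (N + 2 - k)"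
          using aB \<delta>0 B1 by (intro power_mono mult_right_mono) auto
        then show "\<bar>Fp u - P (N + 1 - k)\<bar> \<le> 2 * (a * \<delta>) ^ (N + 2 - k)" using t1 by linarith
      qed (use a0 \<delta>0 in auto)
      also have "a ^ k * real N * \<delta> ^ (k - 1) * (2 * (a * \<delta>) ^ (N + 2 - k)) = 2 * real N * a * (a * \<delta>) ^ (N + 1)"
      proof -
        have e1: "a ^ k = a * a ^ (k - 1)" using Suc by simp
        have e2: "(k - 1) + (N + 2 - k) = N + 1" using Suc k by auto
        have "a ^ (k - 1) * \<delta> ^ (k - 1) * (a * \<delta>) ^ (N + 2 - k) = (a * \<delta>) ^ (N + 1)"
          by (simp only: power_mult_distrib[symmetric] power_add[symmetric] e2)
        then show ?thesis unfolding e1 by (simp add: algebra_simps)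
      qed
      also have "\<dots> \<le> 2 * real N * a * (1/4) ^ (N + 1)"
        using ad a0 \<delta>0 by (intro mult_left_mono power_mono) auto
      finally show ?thesis .
    qed
    have "\<bar>D' N u\<bar> \<le> (\<Sum>k\<le>N. \<bar>VV d k u lam * (real k * x ^ (k - 1) * (Fp u - P (N + 1 - k)))\<bar>)"
      unfolding De by (rule sum_abs)
    also have "\<dots> \<le> (\<Sum>k\<le>N. 2 * real N * a * (1/4) ^ (N + 1))" by (rule sum_mono[OF tb])
    also have "\<dots> = real (N + 1) * (2 * real N * a * (1/4) ^ (N + 1))" by simp
    also have "\<dots> \<le> err N"
    proof -
      have "real (N + 1) * real N \<le> (real N + 1) ^ 2" by (simp add: power2_eq_square algebra_simps)
      then have "real (N + 1) * real N * (2 * a * (1/4) ^ (N + 1)) \<le> (real N + 1) ^ 2 * (2 * a * (1/4) ^ (N + 1))"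
        using a0 by (intro mult_right_mono) auto
      then show ?thesis by (simp add: err_def algebra_simps)
    qed
    finally show ?thesis .
  qed
  have bnd: "\<bar>D N \<theta> - D N 0\<bar> \<le> err N * \<bar>\<theta> - 0\<bar>" for N
  proof -
    have "norm (D N \<theta> - D N 0) \<le> err N * norm (\<theta> - 0)"
    proof (rule field_differentiable_bound)
      show "convex S" by (simp add: S_def)
      fix z assume z: "z \<in> S"
      show "(D N has_field_derivative D' N z) (at z within S)" by (rule DERIV_subset[OF Dd SI]) (use z SI in auto)
      show "norm (D' N z) \<le> err N" using D'b[OF z] by simp
    qed (auto simp: S_def)
    then show ?thesis by simp
  qed
  have D0: "D N 0 = r0" if "1 \<le> N" for N
  proof -
    have "D N 0 = (\<Sum>k\<le>N. (if k = 1 then r0 else 0))"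
      unfolding D_def by (intro sum.cong refl) (simp add: VV_at0 r0)
    also have "\<dots> = r0" using that by simp
    finally show ?thesis .
  qed
  have "(\<lambda>N. D N \<theta> - r0) \<longlonglongrightarrow> 0"
  proof (rule Lim_null_comparison)
    show "\<forall>\<^sub>F N in sequentially. norm (D N \<theta> - r0) \<le> err N * \<bar>\<theta>\<bar>"
      using eventually_ge_at_top[of 1]
      by eventually_elim (use bnd D0 in auto)
    show "(\<lambda>N. err N * \<bar>\<theta>\<bar>) \<longlonglongrightarrow> 0"
      using tendsto_mult_left_zero[OF err_lim[of a, folded err_def[abs_def]]] by simp
  qed
  then have "(\<lambda>N. D N \<theta>) \<longlonglongrightarrow> r0" by (rule LIM_zero_cancel)
  then show ?thesis unfolding sums_def_le D_def by simp
qed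

lemma geo_tail:
  fixes g :: "nat \<Rightarrow> real"
  assumes gb: "\<And>j. \<bar>g j\<bar> \<le> p ^ (j + m)" and p0: "0 \<le> p" and p1: "p \<le> 1/4"
  shows "\<bar>suminf g\<bar> \<le> 2 * p ^ m"
proof -
  have gs: "summable (\<lambda>j. p ^ (j + m))" using p0 p1 by (simp add: power_add summable_mult2)
  have a: "summable (\<lambda>j. \<bar>g j\<bar>)" by (rule summable_comparison_test'[OF gs]) (simp only: real_norm_def abs_abs gb)
  have "\<bar>suminf g\<bar> \<le> (\<Sum>j. \<bar>g j\<bar>)" by (rule summable_rabs[OF a])
  also have "\<dots> \<le> (\<Sum>j. p ^ (j + m))" by (rule suminf_le[OF _ a gs]) (rule gb)
  also have "(\<Sum>j. p ^ (j + m)) = p ^ m * (1 / (1 - p))"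
  proof -
    have "(\<Sum>j. p ^ (j + m)) = (\<Sum>j. p ^ m * p ^ j)" by (intro arg_cong[where f=suminf] ext) (simp add: power_add mult_ac)
    also have "\<dots> = p ^ m * (\<Sum>j. p ^ j)" using p0 p1 by (intro suminf_mult) simp
    also have "(\<Sum>j. p ^ j) = 1 / (1 - p)" using p0 p1 by (intro suminf_geometric) simp
    finally show ?thesis .
  qed
  also have "\<dots> \<le> p ^ m * 2"
    using p0 p1 by (intro mult_left_mono) (auto simp: field_simps)
  finally show ?thesis by (simp add: mult.commute)
qed

lemma stepA:
  assumes sol: "is_polar_sol d lam r0 \<psi> I" and tI: "t \<in> I" and T: "\<bar>t\<bar> \<le> T"
    and a: "a = 2 * BB d lam * exp (BB d lam * T)"
    and a\<delta>: "a ^ 2 * \<delta> \<le> 1/4"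
    and sm: "\<And>u. u \<in> closed_segment 0 t \<Longrightarrow> \<bar>\<psi> u\<bar> \<le> \<delta>"
  shows "\<bar>\<psi> t\<bar> \<le> 2 * \<bar>r0\<bar>"
proof -
  have B1: "1 \<le> BB d lam" by (rule BB_ge1)
  have T0: "0 \<le> T" using T by linarith
  have a1: "1 \<le> a"
  proof -
    have "1 \<le> exp (BB d lam * T)" using B1 T0 by simp
    then have "1 * 1 \<le> BB d lam * exp (BB d lam * T)" using B1 by (intro mult_mono) auto
    then show ?thesis unfolding a by linarith
  qed
  have \<delta>0: "0 \<le> \<delta>" using sm[of 0] by auto
  have ad: "a * \<delta> \<le> 1/4"
  proof -
    have "a * \<delta> \<le> a ^ 2 * \<delta>" using a1 \<delta>0 by (intro mult_right_mono) (auto simp: power2_eq_square)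
    then show ?thesis using a\<delta> by linarith
  qed
  have s: "(\<lambda>k. VV d k t lam * \<psi> t ^ k) sums r0"
    by (rule conserve[OF sol tI T _ sm]) (use ad in \<open>simp add: a\<close>)
  define x where "x = \<psi> t"
  have xd: "\<bar>x\<bar> \<le> \<delta>" using sm[of t] by (simp add: x_def)
  have Vb: "\<bar>VV d k t lam\<bar> \<le> a ^ k" for k using VV_bound_T[OF T] a by simp
  define f where "f = (\<lambda>k. VV d k t lam * x ^ k)"
  have fs: "summable f" unfolding f_def x_def by (rule sums_summable[OF s])
  have split: "r0 = (\<Sum>j. f (j + 2)) + x"
  proof -
    have "suminf f = (\<Sum>j. f (j + 2)) + (\<Sum>i<2. f i)" by (rule suminf_split_initial_segment[OF fs])
    moreover have "(\<Sum>i<2. f i) = x" by (simp add: f_def numeral_2_eq_2)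
    moreover have "suminf f = r0" using sums_unique[OF s] by (simp add: f_def x_def)
    ultimately show ?thesis by simp
  qed
  have p0: "0 \<le> a * \<bar>x\<bar>" using a1 by simp
  have p1: "a * \<bar>x\<bar> \<le> 1/4" using mult_left_mono[OF xd, of a] a1 ad by linarith
  have "\<bar>\<Sum>j. f (j + 2)\<bar> \<le> 2 * (a * \<bar>x\<bar>) ^ 2"
  proof (rule geo_tail[OF _ p0 p1])
    fix j
    have "\<bar>f (j + 2)\<bar> = \<bar>VV d (j + 2) t lam\<bar> * \<bar>x\<bar> ^ (j + 2)" by (simp add: f_def abs_mult power_abs)
    also have "\<dots> \<le> a ^ (j + 2) * \<bar>x\<bar> ^ (j + 2)" by (rule mult_right_mono[OF Vb]) simp
    finally show "\<bar>f (j + 2)\<bar> \<le> (a * \<bar>x\<bar>) ^ (j + 2)" by (simp only: power_mult_distrib)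
  qed
  also have "2 * (a * \<bar>x\<bar>) ^ 2 = 2 * (a ^ 2 * \<bar>x\<bar>) * \<bar>x\<bar>" by (simp add: power2_eq_square)
  also have "\<dots> \<le> 2 * (1/4) * \<bar>x\<bar>"
  proof -
    have "a ^ 2 * \<bar>x\<bar> \<le> a ^ 2 * \<delta>" using xd by (intro mult_left_mono) auto
    then have "a ^ 2 * \<bar>x\<bar> \<le> 1/4" using a\<delta> by linarith
    then show ?thesis by (intro mult_right_mono) auto
  qed
  finally have R: "\<bar>\<Sum>j. f (j + 2)\<bar> \<le> \<bar>x\<bar> / 2" by simp
  have xr: "x = r0 - (\<Sum>j. f (j + 2))" using split by simp
  have "\<bar>x\<bar> \<le> \<bar>r0\<bar> + \<bar>\<Sum>j. f (j + 2)\<bar>" unfolding xr by (rule abs_triangle_ineq4)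
  then have "\<bar>x\<bar> \<le> 2 * \<bar>r0\<bar>" using R by linarith
  then show ?thesis by (simp add: x_def)
qed

lemma seg_abs_strict:
  assumes "u \<in> closed_segment 0 t" "u \<noteq> t"
  shows "\<bar>u\<bar> < \<bar>(t::real)\<bar>"
  using assms by (auto simp: closed_segment_eq_real_ivl split: if_splits)

lemma small:
  assumes sol: "is_polar_sol d lam r0 \<psi> I" and thI: "\<theta> \<in> I" and T: "\<bar>\<theta>\<bar> \<le> T"
    and a: "a = 2 * BB d lam * exp (BB d lam * T)"
    and a\<delta>: "a ^ 2 * \<delta> \<le> 1/4"
    and r0: "\<bar>r0\<bar> < \<delta> / 2"
  shows "\<And>u. u \<in> closed_segment 0 \<theta> \<Longrightarrow> \<bar>\<psi> u\<bar> \<le> 2 * \<bar>r0\<bar>"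
proof -
  define S where "S = closed_segment 0 \<theta>"
  have int: "is_interval I" and zI: "0 \<in> I" and p0: "\<psi> 0 = r0"
    and \<psi>d: "\<And>u. u \<in> I \<Longrightarrow> (\<psi> has_real_derivative polar_rhs d lam u (\<psi> u)) (at u within I)"
    using sol by (auto simp: is_polar_sol_def)
  have SI: "S \<subseteq> I" unfolding S_def by (rule closed_segment_subset[OF zI thI is_interval_convex[OF int]])
  have \<psi>c: "continuous_on I \<psi>"
    using \<psi>d by (auto simp: continuous_on_eq_continuous_within intro: DERIV_continuous)
  then have \<psi>cS: "continuous_on S \<psi>" using SI by (rule continuous_on_subset)
  have subS: "closed_segment 0 t \<subseteq> S" if "t \<in> S" for t
    unfolding S_def by (rule closed_segment_subset) (use that in \<open>auto simp: S_def\<close>)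
  have tabs: "\<bar>t\<bar> \<le> T" if "t \<in> S" for t using seg_abs[of t \<theta>] that T by (simp add: S_def)
  define X where "X = {u \<in> S. \<delta> \<le> \<bar>\<psi> u\<bar>}"
  have XE: "X = {}"
  proof (rule ccontr)
    assume ne: "X \<noteq> {}"
    have cX: "closed X" unfolding X_def
      by (rule continuous_on_closed_Collect_le) (auto intro!: continuous_intros \<psi>cS[unfolded S_def] simp: S_def)
    have kX: "compact X"
    proof -
      have "X = S \<inter> X" by (auto simp: X_def)
      moreover have "compact (S \<inter> X)" using cX by (intro compact_Int_closed) (auto simp: S_def)
      ultimately show ?thesis by simp
    qed
    obtain ts where ts: "ts \<in> X" and tmin: "\<And>y. y \<in> X \<Longrightarrow> \<bar>ts\<bar> \<le> \<bar>y\<bar>"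
    proof -
      have ca: "continuous_on X (\<lambda>x. \<bar>x::real\<bar>)" by (intro continuous_intros)
      show ?thesis using continuous_attains_inf[OF kX ne ca] that by blast
    qed
    have tsS: "ts \<in> S" and tsd: "\<delta> \<le> \<bar>\<psi> ts\<bar>" using ts by (auto simp: X_def)
    have ts0: "ts \<noteq> 0" using tsd p0 r0 by auto
    have lt: "\<bar>\<psi> u\<bar> < \<delta>" if u: "u \<in> closed_segment 0 ts" "u \<noteq> ts" for u
    proof (rule ccontr)
      assume "\<not> \<bar>\<psi> u\<bar> < \<delta>"
      then have "u \<in> X" using subS[OF tsS] u by (auto simp: X_def)
      then have "\<bar>ts\<bar> \<le> \<bar>u\<bar>" by (rule tmin)
      then show False using seg_abs_strict[OF u] by linarith
    qed
    have le: "\<bar>\<psi> u\<bar> \<le> \<delta>" if u: "u \<in> closed_segment 0 ts" for u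
    proof -
      define Y where "Y = {u \<in> closed_segment 0 ts. \<bar>\<psi> u\<bar> \<le> \<delta>}"
      have cY: "closed Y" unfolding Y_def
        by (rule continuous_on_closed_Collect_le)
           (auto intro!: continuous_intros continuous_on_subset[OF \<psi>cS] subS[OF tsS])
      have "open_segment 0 ts \<subseteq> Y"
        using lt by (auto simp: Y_def open_segment_def less_imp_le)
      then have "closure (open_segment 0 ts) \<subseteq> Y" using cY by (rule closure_minimal)
      then have "closed_segment 0 ts \<subseteq> Y" using ts0 by simp
      then show ?thesis using u by (auto simp: Y_def)
    qed
    have "\<bar>\<psi> ts\<bar> \<le> 2 * \<bar>r0\<bar>"
      by (rule stepA[OF sol _ tabs[OF tsS] a a\<delta> le]) (use SI tsS in auto)
    then show False using tsd r0 by linarith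
  qed
  fix u assume u: "u \<in> closed_segment 0 \<theta>"
  then have uS: "u \<in> S" by (simp add: S_def)
  show "\<bar>\<psi> u\<bar> \<le> 2 * \<bar>r0\<bar>"
  proof (rule stepA[OF sol _ tabs[OF uS] a a\<delta>])
    show "u \<in> I" using SI uS by auto
    fix v assume "v \<in> closed_segment 0 u"
    then have "v \<in> S" using subS[OF uS] by auto
    then show "\<bar>\<psi> v\<bar> \<le> \<delta>" using XE by (auto simp: X_def)
  qed
qed

lemma powser_zero_unique:
  fixes a :: "nat \<Rightarrow> real"
  assumes s: "\<And>n. (\<lambda>k. a k * x n ^ k) sums 0" and x0: "x \<longlonglongrightarrow> 0" and nz: "\<And>n. x n \<noteq> 0"
  shows "a k = 0"
proof (induction k rule: less_induct)
  case (less k)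
  have sk: "(\<lambda>j. a (j + k) * x n ^ j) sums 0" for n
  proof -
    have "(\<lambda>j. a (j + k) * x n ^ (j + k)) sums 0"
      using sums_zero_iff_shift[of k "\<lambda>j. a j * x n ^ j" 0] s[of n] less.IH by simp
    then have "(\<lambda>j. inverse (x n ^ k) * (a (j + k) * x n ^ (j + k))) sums (inverse (x n ^ k) * 0)"
      by (rule sums_mult)
    moreover have "inverse (x n ^ k) * (a (j + k) * x n ^ (j + k)) = a (j + k) * x n ^ j" for j
      using nz[of n] by (simp add: power_add field_simps)
    ultimately show ?thesis by simp
  qed
  define g where "g y = (\<Sum>j. a (j + k) * y ^ j)" for y :: real
  have c: "isCont g 0"
    unfolding g_def by (rule isCont_powser[OF sums_summable[OF sk[of 0]]]) (use nz in simp)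
  have "(\<lambda>n. g (x n)) \<longlonglongrightarrow> g 0" by (rule isCont_tendsto_compose[OF c x0])
  moreover have "g (x n) = 0" for n unfolding g_def using sums_unique[OF sk[of n]] by simp
  moreover have "g 0 = a k" unfolding g_def by simp
  ultimately have "(\<lambda>n. 0) \<longlonglongrightarrow> a k" by simp
  then show ?case using LIMSEQ_unique[OF tendsto_const] by metis
qed

lemma v_coeff_eq: "v_coeff d lam \<theta> k = VV d k \<theta> lam"
proof -
  define B where "B = BB d lam"
  define T where "T = \<bar>\<theta>\<bar>"
  define a where "a = 2 * B * exp (B * T)"
  have B1: "1 \<le> B" using BB_ge1 by (simp add: B_def)
  have a1: "1 \<le> a"
  proof -
    have "1 \<le> exp (B * T)" using B1 by (simp add: T_def)
    then have "1 * 1 \<le> B * exp (B * T)" using B1 by (intro mult_mono) auto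
    then show ?thesis unfolding a_def by linarith
  qed
  define \<delta> where "\<delta> = 1 / (4 * a ^ 2)"
  have \<delta>0: "0 < \<delta>" using a1 by (simp add: \<delta>_def)
  have a\<delta>: "a ^ 2 * \<delta> \<le> 1/4" using a1 by (simp add: \<delta>_def)
  have ad: "a * \<delta> \<le> 1/4"
  proof -
    have "a * \<delta> \<le> a ^ 2 * \<delta>" using a1 \<delta>0 by (intro mult_right_mono) (auto simp: power2_eq_square)
    then show ?thesis using a\<delta> by linarith
  qed
  obtain \<epsilon>1 where e1: "\<epsilon>1 > 0" "\<And>r0. \<bar>r0\<bar> < \<epsilon>1 \<Longrightarrow> \<exists>\<phi> I. is_polar_sol d lam r0 \<phi> I \<and> \<theta> \<in> I"
    using exist_all[of d lam \<theta>] by blast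
  define \<epsilon> where "\<epsilon> = min \<epsilon>1 (\<delta> / 2)"
  have e0: "0 < \<epsilon>" using e1 \<delta>0 by (simp add: \<epsilon>_def)
  define V where "V = (\<lambda>k. VV d k \<theta> lam)"
  have key: "(\<lambda>k. V k * \<psi> \<theta> ^ k) sums r0 \<and> \<bar>\<psi> \<theta>\<bar> \<le> 2 * \<bar>r0\<bar>"
    if r0: "\<bar>r0\<bar> < \<epsilon>" and sol: "is_polar_sol d lam r0 \<psi> I" and thI: "\<theta> \<in> I" for r0 \<psi> I
  proof -
    have r0d: "\<bar>r0\<bar> < \<delta> / 2" using r0 by (simp add: \<epsilon>_def)
    have sm: "\<And>u. u \<in> closed_segment 0 \<theta> \<Longrightarrow> \<bar>\<psi> u\<bar> \<le> 2 * \<bar>r0\<bar>"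
      by (rule small[OF sol thI _ _ a\<delta> r0d]) (auto simp: T_def a_def B_def)
    have "(\<lambda>k. VV d k \<theta> lam * \<psi> \<theta> ^ k) sums r0"
    proof (rule conserve[OF sol thI])
      show "\<bar>\<theta>\<bar> \<le> T" by (simp add: T_def)
      show "2 * BB d lam * exp (BB d lam * T) * \<delta> \<le> 1/4" using ad by (simp add: a_def B_def)
      fix u assume "u \<in> closed_segment 0 \<theta>"
      then show "\<bar>\<psi> u\<bar> \<le> \<delta>" using sm r0d by force
    qed
    moreover have "\<bar>\<psi> \<theta>\<bar> \<le> 2 * \<bar>r0\<bar>" by (rule sm) simp
    ultimately show ?thesis by (simp add: V_def)
  qed
  have invV: "inv_expansion d lam \<theta> V"
    unfolding inv_expansion_def
  proof (intro exI[of _ \<epsilon>] conjI allI impI)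
    show "0 < \<epsilon>" by (rule e0)
    fix r0 assume r0: "\<bar>r0\<bar> < \<epsilon>"
    then have "\<bar>r0\<bar> < \<epsilon>1" by (simp add: \<epsilon>_def)
    then obtain \<phi> I where p: "is_polar_sol d lam r0 \<phi> I" "\<theta> \<in> I" using e1 by blast
    then show "\<exists>\<phi> I. is_polar_sol d lam r0 \<phi> I \<and> \<theta> \<in> I \<and> (\<lambda>k. V k * \<phi> \<theta> ^ k) sums r0"
      using key[OF r0 p] by blast
  qed
  have uniq: "v = V" if iv: "inv_expansion d lam \<theta> v" for v
  proof -
    obtain \<epsilon>v where ev: "\<epsilon>v > 0" "\<And>r0. \<bar>r0\<bar> < \<epsilon>v \<Longrightarrow> \<exists>\<phi> I. is_polar_sol d lam r0 \<phi> I \<and> \<theta> \<in> I \<and> (\<lambda>k. v k * \<phi> \<theta> ^ k) sums r0"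
      using iv unfolding inv_expansion_def by blast
    define c where "c = min \<epsilon>v \<epsilon>"
    have c0: "0 < c" using ev e0 by (simp add: c_def)
    define \<rho> where "\<rho> n = c / (real n + 2)" for n
    have \<rho>0: "0 < \<rho> n" for n using c0 by (simp add: \<rho>_def)
    have \<rho>c: "\<rho> n < c" for n
    proof -
      have "c * 1 < c * (real n + 2)" using c0 by (intro mult_strict_left_mono) auto
      then show ?thesis using c0 by (simp add: \<rho>_def divide_less_eq)
    qed
    have "\<forall>n. \<exists>x. (\<lambda>k. v k * x ^ k) sums \<rho> n \<and> (\<lambda>k. V k * x ^ k) sums \<rho> n \<and> \<bar>x\<bar> \<le> 2 * \<rho> n"
    proof
      fix n
      have "\<bar>\<rho> n\<bar> < \<epsilon>v" "\<bar>\<rho> n\<bar> < \<epsilon>" using \<rho>0[of n] \<rho>c[of n] by (auto simp: c_def)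
      obtain \<phi> I where p: "is_polar_sol d lam (\<rho> n) \<phi> I" "\<theta> \<in> I" "(\<lambda>k. v k * \<phi> \<theta> ^ k) sums \<rho> n"
        using ev(2)[OF \<open>\<bar>\<rho> n\<bar> < \<epsilon>v\<close>] by blast
      have "(\<lambda>k. V k * \<phi> \<theta> ^ k) sums \<rho> n \<and> \<bar>\<phi> \<theta>\<bar> \<le> 2 * \<bar>\<rho> n\<bar>"
        by (rule key[OF \<open>\<bar>\<rho> n\<bar> < \<epsilon>\<close> p(1,2)])
      then show "\<exists>x. (\<lambda>k. v k * x ^ k) sums \<rho> n \<and> (\<lambda>k. V k * x ^ k) sums \<rho> n \<and> \<bar>x\<bar> \<le> 2 * \<rho> n"
        using p(3) \<rho>0[of n] by (intro exI[of _ "\<phi> \<theta>"]) auto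
    qed
    then obtain x where x: "\<And>n. (\<lambda>k. v k * x n ^ k) sums \<rho> n" "\<And>n. (\<lambda>k. V k * x n ^ k) sums \<rho> n"
       "\<And>n. \<bar>x n\<bar> \<le> 2 * \<rho> n" by metis
    have nz: "x n \<noteq> 0" for n
    proof
      assume "x n = 0"
      then have "(\<lambda>k. V k * x n ^ k) sums V 0" using powser_sums_zero[of V] by simp
      then have "\<rho> n = V 0" using x(2)[of n] sums_unique2 by blast
      then show False using \<rho>0[of n] by (simp add: V_def)
    qed
    have xl: "x \<longlonglongrightarrow> 0"
    proof (rule Lim_null_comparison)
      show "\<forall>\<^sub>F n in sequentially. norm (x n) \<le> 2 * \<rho> n" using x(3) by simp
      show "(\<lambda>n. 2 * \<rho> n) \<longlonglongrightarrow> 0" unfolding \<rho>_def by real_asymp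
    qed
    have sd: "(\<lambda>k. (v k - V k) * x n ^ k) sums 0" for n
      using sums_diff[OF x(1)[of n] x(2)[of n]] by (simp add: left_diff_distrib)
    have "v k - V k = 0" for k by (rule powser_zero_unique[OF sd xl nz])
    then show ?thesis by (simp add: fun_eq_iff)
  qed
  have "(THE v. inv_expansion d lam \<theta> v) = V"
    by (rule the_equality[where P="\<lambda>v. inv_expansion d lam \<theta> v", OF invV uniq])
  then show ?thesis by (simp add: v_coeff_def V_def)
qed

lemma oddpart_zero: "oddpart lam = zero {i. even i} lam"
  by (auto simp: oddpart_def zero_def fun_eq_iff)

theorem lemmaI1:
  fixes d k :: nat
  assumes "1 \<le> d" and "2 \<le> k"
  defines "k0 \<equiv> (k - 1) div 2" and "k1 \<equiv> (k - 2) div 2"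
  shows "\<exists>(f :: real \<Rightarrow> (nat \<Rightarrow> real) \<Rightarrow> real)
           (w :: nat \<Rightarrow> real \<Rightarrow> (nat \<Rightarrow> real) \<Rightarrow> real).
     (\<forall>\<theta>. poly_in d (f \<theta>)) \<and>
     (\<forall>j\<le>k1. \<forall>s. poly_in d (w j s)) \<and>
     (\<forall>\<theta>. \<exists>g :: nat \<Rightarrow> (nat \<Rightarrow> real) \<Rightarrow> real.
          (\<forall>i\<in>{1..k0}. poly_in d (g i)) \<and>
          (\<forall>lam\<in>params d. f \<theta> lam = (\<Sum>i=1..k0. lam (2 * i) * g i lam))) \<and>
     (\<forall>j\<le>k1. \<forall>lam. w j 0 lam = 0) \<and>
     (\<forall>lam\<in>params d. \<forall>\<theta>.
        v_coeff d lam \<theta> k = f \<theta> lam + (\<Sum>j=0..k1. lam (2 * j + 1) * w j (sin \<theta>) lam))"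
proof -
  have k2: "2 \<le> k" by fact
  define f where "f \<theta> lam = VV d k \<theta> lam - VV d k \<theta> (oddpart lam)" for \<theta> lam
  define Zo where "Zo = (\<lambda>j. 2 * j + 1) ` {..<Suc k1}"
  define G where "G s = (SOME g. (\<forall>j<Suc k1. poly_in d (g j)) \<and>
     (\<forall>lam. WW d k s lam - WW d k s (zero Zo lam) = (\<Sum>j<Suc k1. lam (2 * j + 1) * g j lam)))" for s
  define w where "w j s = (if s = 0 then (\<lambda>_. 0) else G s j)" for j s
  have Wz: "WW d k s (zero Zo lam) = 0" for s lam
  proof -
    have "WW d k s (zero Zo lam) = WW d k s (\<lambda>_. 0)"
    proof (rule WW_dep)
      fix i assume i: "i < k"
      show "lt d (oddpart (zero Zo lam)) i = lt d (oddpart (\<lambda>_. 0)) i"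
      proof (cases "odd i")
        case True
        then obtain j where j: "i = 2 * j + 1" by (metis oddE)
        have "j < Suc k1" using i j k2 unfolding k1_def by linarith
        then have "i \<in> Zo" using j by (auto simp: Zo_def)
        then show ?thesis by (simp add: lt_def oddpart_def zero_def)
      qed (simp add: lt_def oddpart_def)
    qed
    also have "\<dots> = 0" by (rule WW_zero_lam[OF k2])
    finally show ?thesis .
  qed
  have Gp: "(\<forall>j<Suc k1. poly_in d (G s j)) \<and>
     (\<forall>lam. WW d k s lam - WW d k s (zero Zo lam) = (\<Sum>j<Suc k1. lam (2 * j + 1) * G s j lam))" for s
  proof -
    have "\<exists>g. (\<forall>j<Suc k1. poly_in d (g j)) \<and>
       (\<forall>lam. WW d k s lam - WW d k s (zero ((\<lambda>j. 2 * j + 1) ` {..<Suc k1}) lam) = (\<Sum>j<Suc k1. lam (2 * j + 1) * g j lam))"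
      by (rule poly_in_tele) (rule PP_poly_in[OF PP_WW])
    then show ?thesis unfolding G_def Zo_def by (rule someI_ex)
  qed
  have Wsum: "WW d k s lam = (\<Sum>j=0..k1. lam (2 * j + 1) * w j s lam)" for s lam
  proof (cases "s = 0")
    case True
    then show ?thesis using k2 by (simp add: w_def WW_at0)
  next
    case False
    have "WW d k s lam - WW d k s (zero Zo lam) = (\<Sum>j<Suc k1. lam (2 * j + 1) * G s j lam)"
      using Gp[of s] by blast
    then have "WW d k s lam = (\<Sum>j<Suc k1. lam (2 * j + 1) * G s j lam)" using Wz[of s lam] by linarith
    also have "\<dots> = (\<Sum>j=0..k1. lam (2 * j + 1) * w j s lam)"
      using False by (simp add: w_def atLeast0AtMost lessThan_Suc_atMost)
    finally show ?thesis .
  qed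
  show ?thesis
  proof (intro exI[of _ f] exI[of _ w] conjI allI impI ballI)
    fix \<theta>
    have p1: "poly_in d (VV d k \<theta>)" by (rule PP_poly_in[OF PP_VV])
    have p2: "poly_in d (\<lambda>lam. VV d k \<theta> (oddpart lam))"
      unfolding oddpart_zero by (rule poly_in_zero[OF p1])
    show "poly_in d (f \<theta>)" unfolding f_def[abs_def] using poly_in_diff[OF p1 p2] by simp
  next
    fix j s assume "j \<le> k1"
    then show "poly_in d (w j s)" using Gp[of s] poly_in_const0 by (auto simp: w_def)
  next
    fix \<theta>
    define Ze where "Ze = (\<lambda>i. 2 * (i + 1)) ` {..<k0}"
    obtain g where g: "\<forall>i<k0. poly_in d (g i)"
      "\<forall>lam. VV d k \<theta> lam - VV d k \<theta> (zero Ze lam) = (\<Sum>i<k0. lam (2 * (i + 1)) * g i lam)"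
      using poly_in_tele[where n=k0 and a="\<lambda>i. 2 * (i + 1)" and d=d and P="VV d k \<theta>", OF PP_poly_in[OF PP_VV]]
      unfolding Ze_def by blast
    have Ve: "VV d k \<theta> (zero Ze lam) = VV d k \<theta> (oddpart lam)" for lam
    proof (rule VV_dep)
      fix i assume i: "i < k"
      show "lt d (zero Ze lam) i = lt d (oddpart lam) i"
      proof (cases "odd i")
        case True
        then have "i \<notin> Ze" by (auto simp: Ze_def)
        then show ?thesis using True by (simp add: zero_def oddpart_def lt_def)
      next
        case False
        show ?thesis
        proof (cases "i = 0")
          case True then show ?thesis by (simp add: lt_def)
        next
          case i0: False
          from False obtain j where j: "i = 2 * j" by (metis evenE)
          have "j - 1 < k0" using i j i0 k2 unfolding k0_def by linarith
          moreover have "i = 2 * ((j - 1) + 1)" using j i0 by simp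
          ultimately have "i \<in> Ze" unfolding Ze_def by blast
          then show ?thesis using False by (simp add: zero_def oddpart_def lt_def)
        qed
      qed
    qed
    show "\<exists>g. (\<forall>i\<in>{1..k0}. poly_in d (g i)) \<and> (\<forall>lam\<in>params d. f \<theta> lam = (\<Sum>i=1..k0. lam (2 * i) * g i lam))"
    proof (intro exI[of _ "\<lambda>i. g (i - 1)"] conjI ballI)
      fix i assume "i \<in> {1..k0}"
      then show "poly_in d (g (i - 1))" using g(1) by auto
    next
      fix lam
      have "f \<theta> lam = (\<Sum>i<k0. lam (2 * (i + 1)) * g i lam)" using g(2) Ve by (simp add: f_def)
      also have "\<dots> = (\<Sum>i=1..k0. lam (2 * i) * g (i - 1) lam)"
        by (simp add: sum.atLeast1_atMost_eq)
      finally show "f \<theta> lam = (\<Sum>i=1..k0. lam (2 * i) * g (i - 1) lam)" .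
    qed
  next
    fix j lam assume "j \<le> k1"
    show "w j 0 lam = 0" by (simp add: w_def)
  next
    fix lam \<theta> assume "lam \<in> params d"
    have "v_coeff d lam \<theta> k = VV d k \<theta> lam" by (rule v_coeff_eq)
    also have "\<dots> = f \<theta> lam + VV d k \<theta> (oddpart lam)" by (simp add: f_def)
    also have "VV d k \<theta> (oddpart lam) = WW d k (sin \<theta>) lam" by (rule VV_odd)
    also have "\<dots> = (\<Sum>j=0..k1. lam (2 * j + 1) * w j (sin \<theta>) lam)" by (rule Wsum)
    finally show "v_coeff d lam \<theta> k = f \<theta> lam + (\<Sum>j=0..k1. lam (2 * j + 1) * w j (sin \<theta>) lam)" .
  qed
qed

end
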